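(* Let $m\ge0$, $p,q\ge0$ with $p+q\le m$, and $r=m-(p+q)$. Then there is a bijection $$B_m\backslash\mathrm{Her}^{(p,q;r)}_m(\mathbb C)\simeq\coprod_{J\in\binom{[m]}{p+q}}B_{p+q}\backslash\mathrm{GL}_{p+q}(\mathbb C)/\mathrm U(p,q),$$ where the right-hand side is a disjoint union of $\binom{m}{p+q}$ copies of the same set.
   Context: $B_k$ is the group of invertible upper triangular complex $k\times k$ matrices. $\mathrm{Her}^{(p,q;r)}_m(\mathbb C)$ is the set of $m\times m$ Hermitian matrices with $p$ positive eigenvalues, $q$ negative eigenvalues and eigenvalue $0$ of multiplicity $r$; $B_m$ acts on it by $b\cdot z=bzb^*$. $\mathrm U(p,q)=\{g\in\mathrm{GL}_{p+q}(\mathbb C):g^*\mathrm{diag}(\mathbf 1_p,-\mathbf 1_q)g=\mathrm{diag}(\mathbf 1_p,-\mathbf 1_q)\}$; $B_{p+q}$ acts on $\mathrm{GL}_{p+q}(\mathbb C)$ on the left and $\mathrm U(p,q)$ on the right. $\binom{[m]}{k}$ is the set of $k$-element subsets of $\{1,\dots,m\}$. *)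

theory Defs
  imports "Jordan_Normal_Form.Schur_Decomposition" "Jordan_Normal_Form.Char_Poly"
begin

definition Borel :: "nat \<Rightarrow> complex mat set" where
  "Borel k = {b \<in> carrier_mat k k. upper_triangular b \<and> invertible_mat b}"

definition GLc :: "nat \<Rightarrow> complex mat set" where
  "GLc k = {g \<in> carrier_mat k k. invertible_mat g}"

definition eig_mult :: "complex mat \<Rightarrow> complex \<Rightarrow> nat" where
  "eig_mult A x = order x (char_poly A)"

definition num_pos_eig :: "complex mat \<Rightarrow> nat" where
  "num_pos_eig A = (\<Sum>x \<in> {x. x \<in> \<real> \<and> Re x > 0 \<and> eigenvalue A x}. eig_mult A x)"

definition num_neg_eig :: "complex mat \<Rightarrow> nat" where
  "num_neg_eig A = (\<Sum>x \<in> {x. x \<in> \<real> \<and> Re x < 0 \<and> eigenvalue A x}. eig_mult A x)"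

definition Her :: "nat \<Rightarrow> nat \<Rightarrow> nat \<Rightarrow> nat \<Rightarrow> complex mat set" where
  "Her m p q r = {z \<in> carrier_mat m m. mat_adjoint z = z \<and>
      num_pos_eig z = p \<and> num_neg_eig z = q \<and> eig_mult z 0 = r}"

definition Ipq :: "nat \<Rightarrow> nat \<Rightarrow> complex mat" where
  "Ipq p q = mat (p + q) (p + q) (\<lambda>(i, j). if i = j then (if i < p then 1 else -1) else 0)"

definition Upq :: "nat \<Rightarrow> nat \<Rightarrow> complex mat set" where
  "Upq p q = {g \<in> carrier_mat (p + q) (p + q). mat_adjoint g * Ipq p q * g = Ipq p q}"

definition her_orbit_rel :: "nat \<Rightarrow> nat \<Rightarrow> nat \<Rightarrow> nat \<Rightarrow> complex mat rel" where
  "her_orbit_rel m p q r = {(z, w). z \<in> Her m p q r \<and> w \<in> Her m p q r \<and>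
      (\<exists>b \<in> Borel m. w = b * z * mat_adjoint b)}"

definition dcoset_rel :: "nat \<Rightarrow> nat \<Rightarrow> complex mat rel" where
  "dcoset_rel p q = {(g, h). g \<in> GLc (p + q) \<and> h \<in> GLc (p + q) \<and>
      (\<exists>b \<in> Borel (p + q). \<exists>u \<in> Upq p q. h = b * g * u)}"

end

theory Submission
  imports Defs
begin

lemma mult_entry:
  assumes "A \<in> carrier_mat m k" "B \<in> carrier_mat k n" "i < m" "j < n"
  shows "(A * B) $$ (i,j) = (\<Sum>l<k. A $$ (i,l) * B $$ (l,j))"
  using assms by (auto simp: scalar_prod_def lessThan_atLeast0 intro!: sum.cong)

lemma adj_def: "mat_adjoint (A::complex mat) = mat (dim_col A) (dim_row A) (\<lambda>(i,j). cnj (A $$ (j,i)))"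
  unfolding mat_adjoint_def mat_of_rows_def
  by (intro eq_matI) (auto simp: cols_def)

lemma adj_carrier[simp]: "(A::complex mat) \<in> carrier_mat m n \<Longrightarrow> mat_adjoint A \<in> carrier_mat n m"
  by (auto simp: adj_def)

lemma adj_dims[simp]: "dim_row (mat_adjoint (A::complex mat)) = dim_col A"
   "dim_col (mat_adjoint (A::complex mat)) = dim_row A"
  by (auto simp: adj_def)

lemma adj_index[simp]: "i < dim_col A \<Longrightarrow> j < dim_row A \<Longrightarrow> mat_adjoint (A::complex mat) $$ (i,j) = cnj (A $$ (j,i))"
  by (auto simp: adj_def)

lemma adj_adj[simp]: "mat_adjoint (mat_adjoint (A::complex mat)) = A"
  by (intro eq_matI) auto

lemma adj_mult:
  assumes "(A::complex mat) \<in> carrier_mat m k" "B \<in> carrier_mat k n"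
  shows "mat_adjoint (A * B) = mat_adjoint B * mat_adjoint A"
proof (rule eq_matI)
  fix i j assume "i < dim_row (mat_adjoint B * mat_adjoint A)" "j < dim_col (mat_adjoint B * mat_adjoint A)"
  then have ij: "i < n" "j < m" using assms by auto
  have "mat_adjoint (A * B) $$ (i,j) = cnj ((A*B) $$ (j,i))" using assms ij by auto
  also have "\<dots> = (\<Sum>l<k. cnj (A $$ (j,l)) * cnj (B $$ (l,i)))"
    by (subst mult_entry[OF assms]) (use ij in auto)
  also have "\<dots> = (mat_adjoint B * mat_adjoint A) $$ (i,j)"
    by (subst mult_entry[of _ n k _ m]) (use assms ij in \<open>auto simp: mult.commute\<close>)
  finally show "mat_adjoint (A * B) $$ (i,j) = (mat_adjoint B * mat_adjoint A) $$ (i,j)" .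
qed (use assms in auto)

lemma adj_one[simp]: "mat_adjoint (1\<^sub>m n :: complex mat) = 1\<^sub>m n"
  by (intro eq_matI) auto

lemma Ipq_carrier[simp]: "Ipq p q \<in> carrier_mat (p+q) (p+q)"
  by (simp add: Ipq_def)

lemma Ipq_index: "i < p + q \<Longrightarrow> j < p + q \<Longrightarrow> Ipq p q $$ (i,j) = (if i = j then (if i < p then 1 else -1) else 0)"
  by (simp add: Ipq_def)

lemma Ipq_adj[simp]: "mat_adjoint (Ipq p q) = Ipq p q"
  by (intro eq_matI) (auto simp: Ipq_def)

lemma Ipq_sq[simp]: "Ipq p q * Ipq p q = 1\<^sub>m (p+q)"
proof (intro eq_matI)
  fix i j assume ij: "i < dim_row (1\<^sub>m (p + q))" "j < dim_col (1\<^sub>m (p + q) :: complex mat)"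
  have "(Ipq p q * Ipq p q) $$ (i,j) = (\<Sum>l<p+q. Ipq p q $$ (i,l) * Ipq p q $$ (l,j))"
    using ij by (intro mult_entry) auto
  also have "\<dots> = (\<Sum>l\<in>{i}. Ipq p q $$ (i,l) * Ipq p q $$ (l,j))"
    using ij by (intro sum.mono_neutral_right) (auto simp: Ipq_index)
  also have "\<dots> = 1\<^sub>m (p+q) $$ (i,j)" using ij by (auto simp: Ipq_index)
  finally show "(Ipq p q * Ipq p q) $$ (i,j) = 1\<^sub>m (p+q) $$ (i,j)" .
qed (auto simp: Ipq_def)

lemma invertible_iff:
  assumes A: "(A::complex mat) \<in> carrier_mat n n"
  shows "invertible_mat A \<longleftrightarrow> (\<exists>B\<in>carrier_mat n n. B * A = 1\<^sub>m n)"
proof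
  assume "invertible_mat A"
  then obtain B where AB: "A * B = 1\<^sub>m n" and BA: "B * A = 1\<^sub>m (dim_row B)"
    using A unfolding invertible_mat_def inverts_mat_def by auto
  have "dim_col B = n" using AB A by (metis index_mult_mat(3) index_one_mat(3))
  moreover have "dim_row B = n" using BA A by (metis index_mult_mat(3) index_one_mat(3) carrier_matD(2))
  ultimately show "\<exists>B\<in>carrier_mat n n. B * A = 1\<^sub>m n" using BA by auto
next
  assume "\<exists>B\<in>carrier_mat n n. B * A = 1\<^sub>m n"
  then obtain B where B: "B \<in> carrier_mat n n" "B * A = 1\<^sub>m n" by auto
  then have "A * B = 1\<^sub>m n" using mat_mult_left_right_inverse[OF B(1) A] by auto
  then show "invertible_mat A" using A B unfolding invertible_mat_def inverts_mat_def square_mat.simps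
    by auto
qed

lemma invertible_det:
  assumes A: "(A::complex mat) \<in> carrier_mat n n"
  shows "invertible_mat A \<longleftrightarrow> det A \<noteq> 0"
proof
  assume "invertible_mat A"
  then obtain B where B: "B \<in> carrier_mat n n" "B * A = 1\<^sub>m n" using invertible_iff[OF A] by auto
  from arg_cong[OF B(2), of det] det_mult[OF B(1) A] show "det A \<noteq> 0" by auto
next
  assume "det A \<noteq> 0"
  from det_non_zero_imp_unit[OF A this, of undefined]
  obtain B where "B \<in> carrier_mat n n" "B * A = 1\<^sub>m n"
    unfolding Units_def ring_mat_def by auto
  then show "invertible_mat A" using invertible_iff[OF A] by auto
qed

lemma borel_iff: "b \<in> Borel k \<longleftrightarrow> b \<in> carrier_mat k k \<and> upper_triangular b \<and> (\<forall>i<k. b $$ (i,i) \<noteq> 0)"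
proof -
  have "b \<in> carrier_mat k k \<Longrightarrow> upper_triangular b \<Longrightarrow> det b = (\<Prod>i = 0..<k. b $$ (i,i))"
    by (simp add: det_upper_triangular prod_list_diag_prod)
  then show ?thesis unfolding Borel_def using invertible_det[of b k] by auto
qed

lemma borel_det: "b \<in> Borel k \<Longrightarrow> det b \<noteq> 0"
  unfolding Borel_def using invertible_det by auto

lemma borel_carrier: "b \<in> Borel k \<Longrightarrow> b \<in> carrier_mat k k"
  unfolding Borel_def by auto

lemma borel_ut: "b \<in> Borel k \<Longrightarrow> j < i \<Longrightarrow> i < k \<Longrightarrow> b $$ (i,j) = 0"
  unfolding Borel_def upper_triangular_def by auto

lemma borel_I: "b \<in> carrier_mat k k \<Longrightarrow> (\<And>i j. j < i \<Longrightarrow> i < k \<Longrightarrow> b $$ (i,j) = 0) \<Longrightarrow> (\<And>i. i < k \<Longrightarrow> b $$ (i,i) \<noteq> 0) \<Longrightarrow> b \<in> Borel k"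
  unfolding borel_iff upper_triangular_def by auto

lemma borel_one: "1\<^sub>m k \<in> Borel k"
  by (rule borel_I) auto

lemma borel_mult: assumes "b \<in> Borel k" "c \<in> Borel k" shows "b * c \<in> Borel k"
proof -
  have bc: "b \<in> carrier_mat k k" "c \<in> carrier_mat k k" using assms borel_carrier by auto
  have "det (b * c) \<noteq> 0" using det_mult[OF bc] borel_det assms by auto
  moreover have "upper_triangular (b * c)"
    unfolding upper_triangular_def
  proof (intro allI impI)
    fix i j assume ij: "i < dim_row (b * c)" "j < i"
    then have "(b*c) $$ (i,j) = (\<Sum>l<k. b $$ (i,l) * c $$ (l,j))" using bc by (intro mult_entry[of _ k k _ k]) auto
    also have "\<dots> = 0"
    proof (rule sum.neutral, intro ballI)
      fix l assume "l \<in> {..<k}"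
      then show "b $$ (i,l) * c $$ (l,j) = 0" using ij bc borel_ut[OF assms(1), of l i] borel_ut[OF assms(2), of j l]
        by (cases "l < i") auto
    qed
    finally show "(b*c) $$ (i,j) = 0" .
  qed
  moreover have "b * c \<in> carrier_mat k k" using bc by auto
  ultimately show ?thesis unfolding Borel_def using invertible_det[of "b*c" k] by auto
qed

lemma borel_inv: assumes b: "b \<in> Borel k"
  shows "\<exists>c \<in> Borel k. c * b = 1\<^sub>m k \<and> b * c = 1\<^sub>m k"
proof -
  have bc: "b \<in> carrier_mat k k" using b borel_carrier by auto
  obtain c where c: "c \<in> carrier_mat k k" "c * b = 1\<^sub>m k"
    using b invertible_iff[OF bc] unfolding Borel_def by auto
  have cb: "b * c = 1\<^sub>m k" using mat_mult_left_right_inverse[OF c(1) bc c(2)] .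
  have diag: "b $$ (i,i) \<noteq> 0" if "i < k" for i using b that borel_iff by auto
  have ut: "\<forall>i. j < i \<longrightarrow> i < k \<longrightarrow> c $$ (i,j) = 0" for j
  proof (induction j rule: less_induct)
    case (less j)
    show ?case
    proof (intro allI impI)
      fix i assume ij: "j < i" "i < k"
      have "0 = (c * b) $$ (i,j)" using c ij by auto
      also have "\<dots> = (\<Sum>l<k. c $$ (i,l) * b $$ (l,j))" using ij bc c by (intro mult_entry[of _ k k _ k]) auto
      also have "\<dots> = (\<Sum>l\<in>{j}. c $$ (i,l) * b $$ (l,j))"
      proof (rule sum.mono_neutral_right)
        show "\<forall>l\<in>{..<k} - {j}. c $$ (i, l) * b $$ (l, j) = 0"
        proof
          fix l assume l: "l \<in> {..<k} - {j}"
          show "c $$ (i, l) * b $$ (l, j) = 0"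
          proof (cases "l < j")
            case True then show ?thesis using less.IH[of l] ij by auto
          next
            case False then show ?thesis using l borel_ut[OF b, of j l] by auto
          qed
        qed
      qed (use ij in auto)
      also have "\<dots> = c $$ (i,j) * b $$ (j,j)" by simp
      finally show "c $$ (i,j) = 0" using diag[of j] ij by auto
    qed
  qed
  have "c \<in> Borel k"
  proof -
    have "det c \<noteq> 0" using arg_cong[OF c(2), of det] det_mult[OF c(1) bc] by auto
    moreover have "upper_triangular c" unfolding upper_triangular_def using ut c by auto
    ultimately show ?thesis unfolding Borel_def using invertible_det c by auto
  qed
  then show ?thesis using c cb by auto
qed

lemma sum_single:
  assumes "finite A" "k0 \<in> A" "\<And>k. k \<in> A \<Longrightarrow> k \<noteq> k0 \<Longrightarrow> f k = 0"
  shows "sum f A = f k0"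
proof -
  have "sum f A = sum f {k0}" using assms by (intro sum.mono_neutral_right) auto
  then show ?thesis by simp
qed

lemma unitary_completion:
  fixes v :: "complex vec"
  assumes v: "v \<in> carrier_vec n" and v0: "v \<noteq> 0\<^sub>v n" and n: "0 < n"
  shows "\<exists>W c. W \<in> carrier_mat n n \<and> mat_adjoint W * W = 1\<^sub>m n \<and> c \<noteq> 0 \<and> col W 0 = c \<cdot>\<^sub>v v"
proof -
  interpret cof_vec_space n "TYPE(complex)" .
  define b where "b = basis_completion v"
  define ws where "ws = gram_schmidt n b"
  from basis_completion[OF v v0, folded b_def]
  have dist_b: "distinct b" and indep: "\<not> lin_dep (set b)" and bc: "set b \<subseteq> carrier_vec n"
    and hdb: "hd b = v" and len_b: "length b = n" by auto
  from hdb len_b n obtain vs where bv: "b = v # vs" by (cases b, auto)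
  from gram_schmidt_result[OF bc dist_b indep refl, folded ws_def]
  have ws: "set ws \<subseteq> carrier_vec n" "corthogonal ws" "length ws = n" by (auto simp: len_b)
  from gram_schmidt_hd[OF v, of vs, folded bv] have hdws: "hd ws = v" unfolding ws_def .
  have ws0: "ws ! 0 = v" using hdws ws(3) n by (metis hd_conv_nth list.size(3) less_numeral_extra(3))
  have wsc: "ws ! j \<in> carrier_vec n" if "j < n" for j using ws that by auto
  define nsq where "nsq j = (\<Sum>i<n. (cmod (ws!j $ i))^2)" for j
  have nsq_eq: "ws!j \<bullet>c ws!j = complex_of_real (nsq j)" if "j < n" for j
  proof -
    have "ws!j \<bullet>c ws!j = (\<Sum>i<n. ws!j $ i * cnj (ws!j $ i))"
      using wsc[OF that] by (auto simp: scalar_prod_def lessThan_atLeast0)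
    also have "\<dots> = (\<Sum>i<n. complex_of_real ((cmod (ws!j $ i))^2))"
      by (intro sum.cong refl) (metis complex_norm_square)
    finally show ?thesis unfolding nsq_def by simp
  qed
  have nsq_pos: "nsq j > 0" if "j < n" for j
  proof -
    have "ws!j \<bullet>c ws!j \<noteq> 0" using corthogonalD[OF ws(2), of j j] ws(3) that by auto
    then have "nsq j \<noteq> 0" using nsq_eq[OF that] by auto
    moreover have "nsq j \<ge> 0" unfolding nsq_def by (intro sum_nonneg) auto
    ultimately show ?thesis by auto
  qed
  define s where "s j = complex_of_real (sqrt (nsq j))" for j
  have s0: "s j \<noteq> 0" if "j < n" for j using nsq_pos[OF that] unfolding s_def by auto
  have scnj: "cnj (s j) = s j" for j unfolding s_def by simp
  have ss: "s j * s j = complex_of_real (nsq j)" if "j < n" for j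
    using nsq_pos[OF that] unfolding s_def by (simp flip: of_real_mult)
  define W where "W = mat n n (\<lambda>(i,j). ws!j $ i / s j)"
  have W: "W \<in> carrier_mat n n" unfolding W_def by auto
  have "mat_adjoint W * W = 1\<^sub>m n"
  proof (rule eq_matI)
    fix i j assume ij: "i < dim_row (1\<^sub>m n :: complex mat)" "j < dim_col (1\<^sub>m n :: complex mat)"
    then have ij: "i < n" "j < n" by auto
    have "(mat_adjoint W * W) $$ (i,j) = (\<Sum>l<n. cnj (W $$ (l,i)) * W $$ (l,j))"
      using W ij by (subst mult_entry[of _ n n _ n]) auto
    also have "\<dots> = (\<Sum>l<n. ws!j $ l * cnj (ws!i $ l)) / (s i * s j)"
      unfolding sum_divide_distrib
      by (intro sum.cong refl) (use ij in \<open>auto simp: W_def scnj\<close>)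
    also have "(\<Sum>l<n. ws!j $ l * cnj (ws!i $ l)) = ws!j \<bullet>c ws!i"
      using wsc[OF ij(1)] by (auto simp: scalar_prod_def lessThan_atLeast0)
    also have "ws!j \<bullet>c ws!i / (s i * s j) = 1\<^sub>m n $$ (i,j)"
    proof (cases "i = j")
      case True
      then show ?thesis using nsq_eq[OF ij(1)] ss[OF ij(1)] nsq_pos[OF ij(1)] ij by auto
    next
      case False
      then show ?thesis using corthogonalD[OF ws(2), of j i] ws(3) ij by auto
    qed
    finally show "(mat_adjoint W * W) $$ (i,j) = 1\<^sub>m n $$ (i,j)" .
  qed (use W in auto)
  moreover have "col W 0 = (1 / s 0) \<cdot>\<^sub>v v"
    by (rule eq_vecI) (use v n in \<open>auto simp: W_def ws0\<close>)
  moreover have "1 / s 0 \<noteq> 0" using s0 n by auto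
  ultimately show ?thesis using W by blast
qed

definition ext :: "complex \<Rightarrow> complex mat \<Rightarrow> nat \<Rightarrow> complex mat" where
  "ext a M n = mat (Suc n) (Suc n) (\<lambda>(i,j). if i = 0 \<and> j = 0 then a else if i = 0 \<or> j = 0 then 0 else M $$ (i-1,j-1))"

lemma ext_carrier[simp]: "ext a M n \<in> carrier_mat (Suc n) (Suc n)"
  by (simp add: ext_def)

lemma ext_dims[simp]: "dim_row (ext a M n) = Suc n" "dim_col (ext a M n) = Suc n"
  by (simp_all add: ext_def)

lemma ext_index: "i < Suc n \<Longrightarrow> j < Suc n \<Longrightarrow> ext a M n $$ (i,j) = (if i = 0 \<and> j = 0 then a else if i = 0 \<or> j = 0 then 0 else M $$ (i-1,j-1))"
  by (simp add: ext_def)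

lemma ext_mult:
  assumes M: "M \<in> carrier_mat n n" and N: "N \<in> carrier_mat n n"
  shows "ext a M n * ext b N n = ext (a*b) (M*N) n"
proof (rule eq_matI)
  fix i j assume "i < dim_row (ext (a*b) (M*N) n)" "j < dim_col (ext (a*b) (M*N) n)"
  then have ij: "i < Suc n" "j < Suc n" by auto
  have "(ext a M n * ext b N n) $$ (i,j) = (\<Sum>l<Suc n. ext a M n $$ (i,l) * ext b N n $$ (l,j))"
    using ij by (intro mult_entry) auto
  also have "\<dots> = ext a M n $$ (i,0) * ext b N n $$ (0,j) + (\<Sum>l<n. ext a M n $$ (i,Suc l) * ext b N n $$ (Suc l,j))"
    by (rule sum.lessThan_Suc_shift)
  also have "\<dots> = ext (a*b) (M*N) n $$ (i,j)"
  proof (cases "i = 0 \<or> j = 0")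
    case True
    then show ?thesis using ij by (auto simp: ext_index)
  next
    case False
    then have "(\<Sum>l<n. ext a M n $$ (i,Suc l) * ext b N n $$ (Suc l,j)) = (M*N) $$ (i-1,j-1)"
      using ij M N by (subst mult_entry[of _ n n _ n]) (auto simp: ext_index)
    then show ?thesis using ij False by (auto simp: ext_index)
  qed
  finally show "(ext a M n * ext b N n) $$ (i,j) = ext (a*b) (M*N) n $$ (i,j)" .
qed auto

lemma ext_adj:
  assumes M: "M \<in> carrier_mat n n"
  shows "mat_adjoint (ext a M n) = ext (cnj a) (mat_adjoint M) n"
  by (rule eq_matI) (use M in \<open>auto simp: ext_index\<close>)

lemma ext_one: "ext 1 (1\<^sub>m n) n = 1\<^sub>m (Suc n)"
  by (rule eq_matI) (auto simp: ext_index)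

lemma spectral:
  fixes z :: "complex mat"
  assumes "z \<in> carrier_mat n n" "mat_adjoint z = z"
  shows "\<exists>U D. U \<in> carrier_mat n n \<and> mat_adjoint U * U = 1\<^sub>m n \<and> D \<in> carrier_mat n n \<and>
     (\<forall>i<n. \<forall>j<n. i \<noteq> j \<longrightarrow> D $$ (i,j) = 0) \<and> (\<forall>i<n. D $$ (i,i) \<in> \<real>) \<and> z = U * D * mat_adjoint U"
  using assms
proof (induction n arbitrary: z)
  case 0
  then show ?case by (intro exI[of _ "1\<^sub>m 0"] exI[of _ z]) auto
next
  case (Suc n)
  note z = Suc.prems(1) and herm = Suc.prems(2)
  obtain as where as: "char_poly z = (\<Prod>a\<leftarrow>as. [:- a, 1:])" "length as = Suc n"
    using char_poly_factorized[OF z] by auto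
  define lam where "lam = hd as"
  have "lam \<in> set as" unfolding lam_def using as(2) by (cases as) auto
  then have "poly (char_poly z) lam = 0" unfolding as(1) poly_prod_list
    by (induction as) auto
  then have "eigenvalue z lam" using eigenvalue_root_char_poly[OF z] by auto
  then obtain v where v: "v \<in> carrier_vec (Suc n)" "v \<noteq> 0\<^sub>v (Suc n)" "z *\<^sub>v v = lam \<cdot>\<^sub>v v"
    unfolding eigenvalue_def eigenvector_def using z by auto
  obtain W c where W: "W \<in> carrier_mat (Suc n) (Suc n)" "mat_adjoint W * W = 1\<^sub>m (Suc n)" "c \<noteq> 0"
    "col W 0 = c \<cdot>\<^sub>v v"
    using unitary_completion[OF v(1,2)] by auto
  have WWs: "W * mat_adjoint W = 1\<^sub>m (Suc n)"
    using mat_mult_left_right_inverse[OF _ W(1) W(2)] W(1) by auto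
  define A' where "A' = mat_adjoint W * z * W"
  have A': "A' \<in> carrier_mat (Suc n) (Suc n)" unfolding A'_def using W z by auto
  have A'h: "mat_adjoint A' = A'"
    unfolding A'_def using W z herm by (simp add: adj_mult[of _ "Suc n" "Suc n" _ "Suc n"] assoc_mult_mat[of _ "Suc n" "Suc n" _ "Suc n" _ "Suc n"] mult_carrier_mat[of _ "Suc n" "Suc n"])
  have colzW: "col (z * W) 0 = lam \<cdot>\<^sub>v col W 0"
  proof -
    have "col (z * W) 0 = z *\<^sub>v col W 0" using z W(1) by (intro col_mult2) auto
    also have "\<dots> = c \<cdot>\<^sub>v (z *\<^sub>v v)" unfolding W(4) by (rule mult_mat_vec[OF z v(1)])
    also have "\<dots> = lam \<cdot>\<^sub>v (c \<cdot>\<^sub>v v)" unfolding v(3) by (simp add: smult_smult_assoc mult.commute)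
    finally show ?thesis unfolding W(4) .
  qed
  have A'col: "A' $$ (i,0) = (if i = 0 then lam else 0)" if i: "i < Suc n" for i
  proof -
    have "A' = mat_adjoint W * (z * W)" unfolding A'_def using W z
      by (simp add: assoc_mult_mat[of _ "Suc n" "Suc n" _ "Suc n" _ "Suc n"] mult_carrier_mat[of _ "Suc n" "Suc n"])
    then have "A' $$ (i,0) = row (mat_adjoint W) i \<bullet> col (z * W) 0" using i W z by auto
    also have "\<dots> = lam * (row (mat_adjoint W) i \<bullet> col W 0)"
      unfolding colzW using W(1) i by (subst scalar_prod_smult_distrib[of _ "Suc n"]) (auto simp: carrier_vecI)
    also have "row (mat_adjoint W) i \<bullet> col W 0 = (mat_adjoint W * W) $$ (i,0)" using i W(1) by auto
    finally show ?thesis using W(2) i by auto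
  qed
  have lam_cnj: "cnj lam = lam"
  proof -
    have "A' $$ (0,0) = mat_adjoint A' $$ (0,0)" using A'h by simp
    then show ?thesis using A'col[of 0] A' by auto
  qed
  have lam_real: "lam \<in> \<real>" using lam_cnj Reals_cnj_iff by metis
  have A'row: "A' $$ (0,j) = (if j = 0 then lam else 0)" if j: "j < Suc n" for j
  proof -
    have "A' $$ (0,j) = mat_adjoint A' $$ (0,j)" using A'h by simp
    also have "\<dots> = cnj (A' $$ (j,0))" using A' j by auto
    finally show ?thesis using A'col[OF j] lam_cnj by simp
  qed
  define A3 where "A3 = mat n n (\<lambda>(i,j). A' $$ (Suc i, Suc j))"
  have A3: "A3 \<in> carrier_mat n n" unfolding A3_def by auto
  have A3h: "mat_adjoint A3 = A3"
  proof (rule eq_matI)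
    fix i j assume "i < dim_row A3" "j < dim_col A3"
    then have ij: "i < n" "j < n" using A3 by auto
    have "mat_adjoint A3 $$ (i,j) = cnj (A' $$ (Suc j, Suc i))" using ij by (auto simp: A3_def)
    also have "\<dots> = mat_adjoint A' $$ (Suc i, Suc j)" using ij A' by auto
    also have "\<dots> = A3 $$ (i,j)" using A'h ij by (auto simp: A3_def)
    finally show "mat_adjoint A3 $$ (i,j) = A3 $$ (i,j)" .
  qed (auto simp: A3_def)
  have A'ext: "A' = ext lam A3 n"
    by (rule eq_matI) (use A' A'col A'row in \<open>auto simp: ext_index A3_def\<close>)
  obtain V D3 where V: "V \<in> carrier_mat n n" "mat_adjoint V * V = 1\<^sub>m n" "D3 \<in> carrier_mat n n"
    "\<forall>i<n. \<forall>j<n. i \<noteq> j \<longrightarrow> D3 $$ (i,j) = 0" "\<forall>i<n. D3 $$ (i,i) \<in> \<real>" "A3 = V * D3 * mat_adjoint V"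
    using Suc.IH[OF A3 A3h] by auto
  define U where "U = W * ext 1 V n"
  define D where "D = ext lam D3 n"
  have U: "U \<in> carrier_mat (Suc n) (Suc n)" unfolding U_def using W by auto
  have D: "D \<in> carrier_mat (Suc n) (Suc n)" unfolding D_def by auto
  have Uadj: "mat_adjoint U = ext 1 (mat_adjoint V) n * mat_adjoint W"
    unfolding U_def using W V by (simp add: adj_mult[of _ "Suc n" "Suc n" _ "Suc n"] ext_adj)
  have "mat_adjoint U * U = (ext 1 (mat_adjoint V) n * mat_adjoint W) * (W * ext 1 V n)"
    unfolding Uadj by (simp add: U_def)
  also have "\<dots> = ext 1 (mat_adjoint V) n * (mat_adjoint W * W) * ext 1 V n"
    using W(1) V(1) by (simp add: assoc_mult_mat[of _ "Suc n" "Suc n" _ "Suc n" _ "Suc n"] mult_carrier_mat[of _ "Suc n" "Suc n"])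
  also have "\<dots> = 1\<^sub>m (Suc n)" using W(2) V by (simp add: ext_mult ext_one)
  finally have UU: "mat_adjoint U * U = 1\<^sub>m (Suc n)" .
  have "z = W * A' * mat_adjoint W"
  proof -
    have "W * A' * mat_adjoint W = (W * mat_adjoint W) * z * (W * mat_adjoint W)"
      unfolding A'_def using W z by (simp add: assoc_mult_mat[of _ "Suc n" "Suc n" _ "Suc n" _ "Suc n"] mult_carrier_mat[of _ "Suc n" "Suc n"])
    then show ?thesis using WWs z by simp
  qed
  also have "A' = ext 1 V n * D * ext 1 (mat_adjoint V) n"
    unfolding A'ext D_def V(6) using V by (simp add: ext_mult)
  also have "W * (ext 1 V n * D * ext 1 (mat_adjoint V) n) * mat_adjoint W = U * D * mat_adjoint U"
    unfolding Uadj unfolding U_def using W V D by (simp add: assoc_mult_mat[of _ "Suc n" "Suc n" _ "Suc n" _ "Suc n"] mult_carrier_mat[of _ "Suc n" "Suc n"])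
  finally have zU: "z = U * D * mat_adjoint U" .
  have "\<forall>i<Suc n. \<forall>j<Suc n. i \<noteq> j \<longrightarrow> D $$ (i,j) = 0"
    using V(4) by (auto simp: D_def ext_index)
  moreover have "\<forall>i<Suc n. D $$ (i,i) \<in> \<real>"
    using V(5) lam_real by (auto simp: D_def ext_index)
  ultimately show ?case using U UU D zU by blast
qed

lemma assoc_dim: "dim_col A = dim_row B \<Longrightarrow> dim_col B = dim_row C \<Longrightarrow> (A*B)*C = A*(B*(C::'a::semiring_0 mat))"
  by (rule assoc_mult_mat[of A "dim_row A" "dim_col A" B "dim_col B" C "dim_col C"]) auto

lemma Ipq_dims[simp]: "dim_row (Ipq p q) = p + q" "dim_col (Ipq p q) = p + q"
  by (simp_all add: Ipq_def)

lemma order_linear_prod: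
  fixes x :: complex
  shows "order x (\<Prod>a\<leftarrow>es. [:- a, 1:]) = length (filter ((=) x) es)"
proof (induction es)
  case Nil
  then show ?case by (simp add: order_0I)
next
  case (Cons a es)
  have nz: "(\<Prod>a\<leftarrow>es. [:- a, 1:]) \<noteq> (0 :: complex poly)"
    by (auto simp: prod_list_zero_iff)
  have "order x ([:- a, 1:] * (\<Prod>a\<leftarrow>es. [:- a, 1:])) = order x [:- a, 1:] + order x (\<Prod>a\<leftarrow>es. [:- a, 1:])"
    using nz by (intro order_mult) (metis mult_eq_0_iff pCons_eq_0_iff one_neq_zero)
  moreover have "order x [:- a, 1:] = (if x = a then 1 else 0)"
  proof (cases "x = a")
    case True
    then show ?thesis using order_power_n_n[of a 1] by simp
  next
    case False
    then have "poly [:- a, 1:] x \<noteq> 0" by simp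
    from order_0I[OF this] show ?thesis using False by simp
  qed
  ultimately show ?case using Cons by auto
qed

lemma spectral_counts:
  fixes z :: "complex mat"
  assumes z: "z \<in> carrier_mat n n" and U: "U \<in> carrier_mat n n" "mat_adjoint U * U = 1\<^sub>m n"
    and D: "D \<in> carrier_mat n n" "\<forall>i<n. \<forall>j<n. i \<noteq> j \<longrightarrow> D $$ (i,j) = 0"
    and zU: "z = U * D * mat_adjoint U"
  shows "eig_mult z x = card {i. i < n \<and> D $$ (i,i) = x}"
    and "eigenvalue z x \<longleftrightarrow> (\<exists>i<n. D $$ (i,i) = x)"
proof -
  have UU: "U * mat_adjoint U = 1\<^sub>m n" using mat_mult_left_right_inverse[OF _ U(1) U(2)] U(1) by auto
  have "similar_mat_wit z D U (mat_adjoint U)"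
    by (rule similar_mat_witI[of _ _ n]) (use U UU D z zU in auto)
  then have "similar_mat z D" unfolding similar_mat_def by blast
  then have cz: "char_poly z = char_poly D" by (rule char_poly_similar)
  have ut: "upper_triangular D" unfolding upper_triangular_def using D by auto
  have cD: "char_poly D = (\<Prod>a\<leftarrow>diag_mat D. [:- a, 1:])"
    by (rule char_poly_upper_triangular[OF D(1) ut])
  have len: "length (filter ((=) x) (diag_mat D)) = card {i. i < n \<and> D $$ (i,i) = x}"
    unfolding length_filter_conv_card diag_mat_def using D by (intro arg_cong[where f=card]) auto
  show em: "eig_mult z x = card {i. i < n \<and> D $$ (i,i) = x}"
    unfolding eig_mult_def cz cD order_linear_prod len ..
  have nz: "char_poly z \<noteq> 0" unfolding cz cD by (auto simp: prod_list_zero_iff)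
  have "eigenvalue z x \<longleftrightarrow> order x (char_poly z) \<noteq> 0"
    using eigenvalue_root_char_poly[OF z] order_root nz by metis
  also have "\<dots> \<longleftrightarrow> card {i. i < n \<and> D $$ (i,i) = x} \<noteq> 0" using em unfolding eig_mult_def by simp
  also have "\<dots> \<longleftrightarrow> (\<exists>i<n. D $$ (i,i) = x)" by auto
  finally show "eigenvalue z x \<longleftrightarrow> (\<exists>i<n. D $$ (i,i) = x)" .
qed

lemma card_fibers:
  fixes d :: "nat \<Rightarrow> complex"
  assumes "finite S"
  shows "card S = (\<Sum>y\<in>d ` S. card {i. i \<in> S \<and> d i = y})"
  using sum.image_gen[OF assms, of "\<lambda>_. 1::nat" d] by simp

lemma herm_factor:
  fixes z :: "complex mat"
  assumes z: "z \<in> carrier_mat m m" and herm: "mat_adjoint z = z"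
  shows "\<exists>p' q' A L. p' + q' \<le> m \<and> A \<in> carrier_mat m (p'+q') \<and> L \<in> carrier_mat (p'+q') m \<and>
     L * A = 1\<^sub>m (p'+q') \<and> z = A * Ipq p' q' * mat_adjoint A \<and>
     num_pos_eig z = p' \<and> num_neg_eig z = q' \<and> eig_mult z 0 = m - (p'+q')"
proof -
  obtain U D where U: "U \<in> carrier_mat m m" "mat_adjoint U * U = 1\<^sub>m m" and D: "D \<in> carrier_mat m m"
    "\<forall>i<m. \<forall>j<m. i \<noteq> j \<longrightarrow> D $$ (i,j) = 0" and Dr: "\<forall>i<m. D $$ (i,i) \<in> \<real>" and zU: "z = U * D * mat_adjoint U"
    using spectral[OF z herm] by blast
  note cnt = spectral_counts[OF z U D zU]
  define d where "d i = Re (D $$ (i,i))" for i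
  have Dd: "D $$ (i,i) = complex_of_real (d i)" if "i < m" for i
    using Dr that unfolding d_def by (simp add: Reals_def)
  define Pos where "Pos = {i. i < m \<and> d i > 0}"
  define Neg where "Neg = {i. i < m \<and> d i < 0}"
  define Zer where "Zer = {i. i < m \<and> d i = 0}"
  define p' where "p' = card Pos"
  define q' where "q' = card Neg"
  define n where "n = p' + q'"
  have finP: "finite Pos" "finite Neg" "finite Zer" unfolding Pos_def Neg_def Zer_def by auto
  have "{..<m} = Pos \<union> Neg \<union> Zer" unfolding Pos_def Neg_def Zer_def by auto
  then have "m = card (Pos \<union> Neg \<union> Zer)" by (metis card_lessThan)
  also have "\<dots> = card (Pos \<union> Neg) + card Zer"
    by (rule card_Un_disjoint) (use finP in \<open>auto simp: Pos_def Neg_def Zer_def\<close>)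
  also have "card (Pos \<union> Neg) = card Pos + card Neg"
    by (rule card_Un_disjoint) (use finP in \<open>auto simp: Pos_def Neg_def\<close>)
  finally have "m = card Pos + card Neg + card Zer" .
  then have mcnt: "card Zer = m - n" "n \<le> m" unfolding n_def p'_def q'_def by auto
  have npos: "num_pos_eig z = p'"
  proof -
    have eq: "{x. x \<in> \<real> \<and> Re x > 0 \<and> eigenvalue z x} = (\<lambda>i. D $$ (i,i)) ` Pos"
    proof (intro equalityI subsetI)
      fix x assume "x \<in> {x. x \<in> \<real> \<and> Re x > 0 \<and> eigenvalue z x}"
      then obtain i where i: "i < m" "D $$ (i,i) = x" "Re x > 0" using cnt(2) by auto
      then show "x \<in> (\<lambda>i. D $$ (i,i)) ` Pos" unfolding Pos_def d_def by auto
    next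
      fix x assume "x \<in> (\<lambda>i. D $$ (i,i)) ` Pos"
      then obtain i where i: "i \<in> Pos" "x = D $$ (i,i)" by auto
      then show "x \<in> {x. x \<in> \<real> \<and> Re x > 0 \<and> eigenvalue z x}"
        using cnt(2)[of x] Dr unfolding Pos_def d_def by auto
    qed
    have "num_pos_eig z = (\<Sum>x\<in>(\<lambda>i. D $$ (i,i)) ` Pos. card {i. i \<in> Pos \<and> D $$ (i,i) = x})"
      unfolding num_pos_eig_def eq cnt(1)
      by (intro sum.cong refl arg_cong[where f=card]) (auto simp: Pos_def d_def)
    also have "\<dots> = card Pos" using card_fibers[OF finP(1)] by simp
    finally show ?thesis unfolding p'_def .
  qed
  have nneg: "num_neg_eig z = q'"
  proof -
    have eq: "{x. x \<in> \<real> \<and> Re x < 0 \<and> eigenvalue z x} = (\<lambda>i. D $$ (i,i)) ` Neg"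
    proof (intro equalityI subsetI)
      fix x assume "x \<in> {x. x \<in> \<real> \<and> Re x < 0 \<and> eigenvalue z x}"
      then obtain i where i: "i < m" "D $$ (i,i) = x" "Re x < 0" using cnt(2) by auto
      then show "x \<in> (\<lambda>i. D $$ (i,i)) ` Neg" unfolding Neg_def d_def by auto
    next
      fix x assume "x \<in> (\<lambda>i. D $$ (i,i)) ` Neg"
      then obtain i where i: "i \<in> Neg" "x = D $$ (i,i)" by auto
      then show "x \<in> {x. x \<in> \<real> \<and> Re x < 0 \<and> eigenvalue z x}"
        using cnt(2)[of x] Dr unfolding Neg_def d_def by auto
    qed
    have "num_neg_eig z = (\<Sum>x\<in>(\<lambda>i. D $$ (i,i)) ` Neg. card {i. i \<in> Neg \<and> D $$ (i,i) = x})"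
      unfolding num_neg_eig_def eq cnt(1)
      by (intro sum.cong refl arg_cong[where f=card]) (auto simp: Neg_def d_def)
    also have "\<dots> = card Neg" using card_fibers[OF finP(2)] by simp
    finally show ?thesis unfolding q'_def .
  qed
  have nzer: "eig_mult z 0 = m - n"
  proof -
    have "eig_mult z 0 = card Zer" unfolding cnt(1) Zer_def
      by (intro arg_cong[where f=card]) (auto simp: Dd)
    then show ?thesis using mcnt by simp
  qed
  obtain fP where fP: "bij_betw fP {0..<p'} Pos" using ex_bij_betw_nat_finite[OF finP(1)] p'_def by auto
  obtain fN where fN: "bij_betw fN {0..<q'} Neg" using ex_bij_betw_nat_finite[OF finP(2)] q'_def by auto
  define idx where "idx k = (if k < p' then fP k else fN (k - p'))" for k
  have idx_m: "idx k < m" if "k < n" for k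
    using that fP fN unfolding idx_def n_def bij_betw_def Pos_def Neg_def by auto
  have idx_pos: "d (idx k) > 0" if "k < p'" for k
    using that fP unfolding idx_def bij_betw_def Pos_def by auto
  have idx_neg: "d (idx k) < 0" if "p' \<le> k" "k < n" for k
    using that fN unfolding idx_def bij_betw_def Neg_def n_def by auto
  have idx_nz: "d (idx k) \<noteq> 0" if "k < n" for k
  proof (cases "k < p'")
    case True then show ?thesis using idx_pos[of k] by simp
  next
    case False then show ?thesis using idx_neg[of k] that by simp
  qed
  have idx_inj: "k = l" if "k < n" "l < n" "idx k = idx l" for k l
  proof (cases "k < p'"; cases "l < p'")
    assume "k < p'" "l < p'" then show ?thesis using that fP unfolding idx_def bij_betw_def inj_on_def by auto
  next
    assume "\<not> k < p'" "\<not> l < p'"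
    then have "fN (k - p') = fN (l - p')" "k - p' \<in> {0..<q'}" "l - p' \<in> {0..<q'}" using that unfolding idx_def n_def by auto
    then have "k - p' = l - p'" using fN unfolding bij_betw_def inj_on_def by blast
    then show ?thesis using \<open>\<not> k < p'\<close> \<open>\<not> l < p'\<close> by auto
  next
    assume "k < p'" "\<not> l < p'" then show ?thesis using idx_pos[of k] idx_neg[of l] that by auto
  next
    assume "\<not> k < p'" "l < p'" then show ?thesis using idx_pos[of l] idx_neg[of k] that by auto
  qed
  have idx_surj: "\<exists>k<n. idx k = i" if "i < m" "d i \<noteq> 0" for i
  proof (cases "d i > 0")
    case True
    then have "i \<in> Pos" using that unfolding Pos_def by auto
    then obtain k where "k \<in> {0..<p'}" "fP k = i" using fP unfolding bij_betw_def by auto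
    then show ?thesis unfolding idx_def n_def by (intro exI[of _ k]) auto
  next
    case False
    then have "i \<in> Neg" using that unfolding Neg_def by auto
    then obtain k where "k \<in> {0..<q'}" "fN k = i" using fN unfolding bij_betw_def by auto
    then show ?thesis unfolding idx_def n_def by (intro exI[of _ "k + p'"]) auto
  qed
  define sq where "sq i = complex_of_real (sqrt \<bar>d i\<bar>)" for i
  have sq_nz: "sq (idx k) \<noteq> 0" if "k < n" for k using idx_nz[OF that] unfolding sq_def by auto
  have sq_cnj: "cnj (sq i) = sq i" for i unfolding sq_def by simp
  have sq_sq: "sq i * sq i = complex_of_real \<bar>d i\<bar>" for i unfolding sq_def by (simp flip: of_real_mult)
  define S where "S = mat m n (\<lambda>(i,k). if i = idx k then sq i else 0)"
  define T where "T = mat n m (\<lambda>(k,i). if i = idx k then 1 / sq i else 0)"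
  have S: "S \<in> carrier_mat m n" and T: "T \<in> carrier_mat n m" unfolding S_def T_def by auto
  have TS: "T * S = 1\<^sub>m n"
  proof (rule eq_matI)
    fix k l assume "k < dim_row (1\<^sub>m n :: complex mat)" "l < dim_col (1\<^sub>m n :: complex mat)"
    then have kl: "k < n" "l < n" by auto
    have "(T * S) $$ (k,l) = (\<Sum>i<m. T $$ (k,i) * S $$ (i,l))" using S T kl by (intro mult_entry) auto
    also have "\<dots> = T $$ (k,idx k) * S $$ (idx k,l)"
      by (rule sum_single) (use kl idx_m in \<open>auto simp: T_def\<close>)
    also have "\<dots> = 1\<^sub>m n $$ (k,l)"
      using kl idx_m sq_nz idx_inj by (auto simp: T_def S_def)
    finally show "(T * S) $$ (k,l) = 1\<^sub>m n $$ (k,l)" .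
  qed (use S T in auto)
  have SI: "(S * Ipq p' q') $$ (i,k) = S $$ (i,k) * (if k < p' then 1 else -1)" if "i < m" "k < n" for i k
  proof -
    have "(S * Ipq p' q') $$ (i,k) = (\<Sum>l<n. S $$ (i,l) * Ipq p' q' $$ (l,k))"
      using S that unfolding n_def by (intro mult_entry) auto
    also have "\<dots> = S $$ (i,k) * Ipq p' q' $$ (k,k)"
      by (rule sum_single) (use that in \<open>auto simp: Ipq_index n_def\<close>)
    finally show ?thesis using that by (simp add: Ipq_index n_def)
  qed
  have SIS: "S * Ipq p' q' * mat_adjoint S = D"
  proof (rule eq_matI)
    fix i j assume "i < dim_row D" "j < dim_col D"
    then have ij: "i < m" "j < m" using D by auto
    have "(S * Ipq p' q' * mat_adjoint S) $$ (i,j) = (\<Sum>k<n. (S * Ipq p' q') $$ (i,k) * mat_adjoint S $$ (k,j))"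
      using S ij unfolding n_def by (intro mult_entry[of _ m "p'+q'" _ m]) auto
    also have "\<dots> = (\<Sum>k<n. S $$ (i,k) * (if k < p' then 1 else -1) * cnj (S $$ (j,k)))"
      by (intro sum.cong refl) (use ij S in \<open>auto simp: SI\<close>)
    also have "\<dots> = D $$ (i,j)"
    proof (cases "i = j \<and> d i \<noteq> 0")
      case True
      then obtain k where k: "k < n" "idx k = i" using idx_surj ij by auto
      have "(\<Sum>k<n. S $$ (i,k) * (if k < p' then 1 else -1) * cnj (S $$ (j,k)))
          = S $$ (i,k) * (if k < p' then 1 else -1) * cnj (S $$ (j,k))"
        by (rule sum_single) (use k True ij idx_inj in \<open>auto simp: S_def\<close>)
      also have "\<dots> = sq i * sq i * (if k < p' then 1 else -1)"
        using k True ij by (auto simp: S_def sq_cnj)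
      also have "\<dots> = D $$ (i,j)"
        using True ij k idx_pos[of k] idx_neg[of k] by (auto simp: sq_sq Dd)
      finally show ?thesis .
    next
      case False
      have "(\<Sum>k<n. S $$ (i,k) * (if k < p' then 1 else -1) * cnj (S $$ (j,k))) = 0"
      proof (rule sum.neutral, intro ballI)
        fix k assume k: "k \<in> {..<n}"
        show "S $$ (i,k) * (if k < p' then 1 else -1) * cnj (S $$ (j,k)) = 0"
          using False k ij idx_nz[of k] by (auto simp: S_def)
      qed
      moreover have "D $$ (i,j) = 0" using False D ij Dd by (cases "i = j") auto
      ultimately show ?thesis by simp
    qed
    finally show "(S * Ipq p' q' * mat_adjoint S) $$ (i,j) = D $$ (i,j)" .
  qed (use S D in \<open>auto simp: n_def\<close>)
  define A where "A = U * S"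
  define L where "L = T * mat_adjoint U"
  have A: "A \<in> carrier_mat m n" unfolding A_def using U S by auto
  have L: "L \<in> carrier_mat n m" unfolding L_def using U T by auto
  have LA: "L * A = 1\<^sub>m n"
  proof -
    have "mat_adjoint U * (U * S) = (mat_adjoint U * U) * S"
      using U(1) S by (intro assoc_mult_mat[symmetric, of _ m m _ m _ n]) auto
    also have "\<dots> = S" using U(2) S by simp
    finally have 1: "mat_adjoint U * (U * S) = S" .
    have "L * A = T * (mat_adjoint U * (U * S))" unfolding L_def A_def
      using U(1) T S by (intro assoc_mult_mat[of _ n m _ m _ n]) auto
    then have "L * A = T * S" using 1 by simp
    then show ?thesis using TS by simp
  qed
  have "A * Ipq p' q' * mat_adjoint A = U * (S * Ipq p' q' * mat_adjoint S) * mat_adjoint U"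
    unfolding A_def using U(1) S by (simp add: adj_mult[of _ m m _ n] n_def assoc_dim carrier_matD[OF U(1)] carrier_matD[OF S[unfolded n_def]])
  then have zA: "z = A * Ipq p' q' * mat_adjoint A" unfolding SIS zU by simp
  show ?thesis
    by (intro exI[of _ p'] exI[of _ q'] exI[of _ A] exI[of _ L])
      (use mcnt A L LA zA npos nneg nzer in \<open>auto simp: n_def\<close>)
qed

lemma adj_Ipq_prod:
  assumes A: "A \<in> carrier_mat m (p+q)"
  shows "mat_adjoint (A * Ipq p q * mat_adjoint A) = A * Ipq p q * mat_adjoint A"
proof -
  have "mat_adjoint (A * Ipq p q * mat_adjoint A) = mat_adjoint (mat_adjoint A) * mat_adjoint (A * Ipq p q)"
    by (rule adj_mult[of _ m "p+q" _ m]) (use A in auto)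
  also have "mat_adjoint (A * Ipq p q) = Ipq p q * mat_adjoint A"
    by (subst adj_mult[of _ m "p+q" _ "p+q"]) (use A in auto)
  finally show ?thesis using A by (simp add: assoc_dim carrier_matD[OF A])
qed

lemma uniq:
  fixes A A' L L' I I' :: "complex mat"
  assumes A: "A \<in> carrier_mat m n" and L: "L \<in> carrier_mat n m" and LA: "L * A = 1\<^sub>m n"
    and A': "A' \<in> carrier_mat m n'" and L': "L' \<in> carrier_mat n' m" and LA': "L' * A' = 1\<^sub>m n'"
    and I: "I \<in> carrier_mat n n" and I': "I' \<in> carrier_mat n' n'" "I' * I' = 1\<^sub>m n'"
    and eq: "A * I * mat_adjoint A = A' * I' * mat_adjoint A'"
  shows "A' = A * (L * A') \<and> I = (L * A') * I' * mat_adjoint (L * A')"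
proof -
  note dims = carrier_matD[OF A] carrier_matD[OF L] carrier_matD[OF A'] carrier_matD[OF L'] carrier_matD[OF I] carrier_matD[OF I'(1)]
  have adjLA': "mat_adjoint A' * mat_adjoint L' = 1\<^sub>m n'"
    using adj_mult[OF L' A'] LA' by simp
  have "A * L * (A * I * mat_adjoint A) = A * (L * A) * I * mat_adjoint A"
    by (simp add: assoc_dim dims)
  also have "\<dots> = A * I * mat_adjoint A" using LA A I by simp
  finally have "A * L * (A' * I' * mat_adjoint A') = A' * I' * mat_adjoint A'" unfolding eq .
  then have "A * L * (A' * I' * mat_adjoint A') * mat_adjoint L' * I' = A' * I' * mat_adjoint A' * mat_adjoint L' * I'"
    by simp
  moreover have "A * L * (A' * I' * mat_adjoint A') * mat_adjoint L' * I' = A * L * A' * I' * (mat_adjoint A' * mat_adjoint L') * I'"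
    by (simp add: assoc_dim dims)
  moreover have "A' * I' * mat_adjoint A' * mat_adjoint L' * I' = A' * I' * (mat_adjoint A' * mat_adjoint L') * I'"
    by (simp add: assoc_dim dims)
  ultimately have "A * L * A' * I' * I' = A' * I' * I'"
    unfolding adjLA' using A L A' I' by (simp add: assoc_dim dims)
  then have 1: "A' = A * (L * A')" using A L A' I' by (simp add: assoc_dim dims)
  have "I = (L * A) * I * mat_adjoint (L * A)" using LA I by simp
  also have "\<dots> = L * (A * I * mat_adjoint A) * mat_adjoint L"
    by (simp add: adj_mult[OF L A] assoc_dim dims)
  also have "\<dots> = L * (A' * I' * mat_adjoint A') * mat_adjoint L" unfolding eq ..
  also have "\<dots> = (L * A') * I' * mat_adjoint (L * A')"
    by (simp add: adj_mult[OF L A'] assoc_dim dims)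
  finally show ?thesis using 1 by simp
qed

lemma dim_eq_from_inverse:
  fixes X Y :: "complex mat"
  assumes X: "X \<in> carrier_mat a b" and Y: "Y \<in> carrier_mat b a" and XY: "X * Y = 1\<^sub>m a" and YX: "Y * X = 1\<^sub>m b"
  shows "a = b"
proof -
  have "complex_of_nat a = (\<Sum>i<a. (X * Y) $$ (i,i))" unfolding XY by simp
  also have "\<dots> = (\<Sum>i<a. \<Sum>j<b. X $$ (i,j) * Y $$ (j,i))"
    by (intro sum.cong refl mult_entry[OF X Y]) auto
  also have "\<dots> = (\<Sum>j<b. \<Sum>i<a. Y $$ (j,i) * X $$ (i,j))"
    by (subst sum.swap) (simp add: mult.commute)
  also have "\<dots> = (\<Sum>j<b. (Y * X) $$ (j,j))"
    by (intro sum.cong refl mult_entry[OF Y X, symmetric]) auto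
  also have "\<dots> = complex_of_nat b" unfolding YX by simp
  finally show ?thesis by simp
qed

lemma qf_Ipq:
  fixes W :: "complex mat"
  assumes W: "W \<in> carrier_mat (a+b) 1"
  shows "(mat_adjoint W * Ipq a b * W) $$ (0,0) = complex_of_real (\<Sum>k<a+b. (if k < a then 1 else -1) * (cmod (W $$ (k,0)))^2)"
proof -
  have WI: "(mat_adjoint W * Ipq a b) $$ (0,k) = cnj (W $$ (k,0)) * (if k < a then 1 else -1)" if k: "k < a+b" for k
  proof -
    have "(mat_adjoint W * Ipq a b) $$ (0,k) = (\<Sum>l<a+b. mat_adjoint W $$ (0,l) * Ipq a b $$ (l,k))"
      using W k by (intro mult_entry) auto
    also have "\<dots> = mat_adjoint W $$ (0,k) * Ipq a b $$ (k,k)"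
      by (rule sum_single) (use k in \<open>auto simp: Ipq_index\<close>)
    finally show ?thesis using k W by (simp add: Ipq_index)
  qed
  have "(mat_adjoint W * Ipq a b * W) $$ (0,0) = (\<Sum>k<a+b. (mat_adjoint W * Ipq a b) $$ (0,k) * W $$ (k,0))"
    using W by (intro mult_entry[of _ 1 "a+b" _ 1]) auto
  also have "\<dots> = (\<Sum>k<a+b. complex_of_real ((if k < a then 1 else -1) * (cmod (W $$ (k,0)))^2))"
  proof (intro sum.cong refl)
    fix k assume "k \<in> {..<a+b}"
    then show "(mat_adjoint W * Ipq a b) $$ (0,k) * W $$ (k,0) = complex_of_real ((if k < a then 1 else -1) * (cmod (W $$ (k,0)))^2)"
    proof -
      have "W $$ (k,0) * cnj (W $$ (k,0)) = complex_of_real ((cmod (W $$ (k,0)))^2)"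
        by (metis complex_norm_square)
      then show ?thesis using WI[of k] \<open>k \<in> {..<a+b}\<close> by (auto simp: mult.commute mult.left_commute)
    qed
  qed
  finally show ?thesis by simp
qed

lemma inertia_le:
  fixes u :: "complex mat"
  assumes u: "u \<in> carrier_mat n n" and n: "n = p + q" "n = p' + q'"
    and eq: "Ipq p q = u * Ipq p' q' * mat_adjoint u"
  shows "p \<le> p'"
proof (rule ccontr)
  assume "\<not> p \<le> p'"
  then have lt: "p' < p" by simp
  define C where "C = mat n n (\<lambda>(k,j). if k < p' then cnj (u $$ (j,k)) else if k < p' + (n - p) then (if j = p + (k - p') then 1 else 0) else 0)"
  have C: "C \<in> carrier_mat n n" unfolding C_def by auto
  have n1: "n - 1 < n" "\<not> n - 1 < p' + (n - p)" using lt n by auto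
  have "C = mat\<^sub>r n n (\<lambda>i. if i = n - 1 then 0\<^sub>v n else row C i)"
    by (rule eq_matI) (use n1 in \<open>auto simp: C_def\<close>)
  also have "det \<dots> = 0" by (rule det_row_0[OF n1(1)]) (use C in auto)
  finally have "det C = 0" .
  then obtain y where y: "y \<in> carrier_vec n" "y \<noteq> 0\<^sub>v n" "C *\<^sub>v y = 0\<^sub>v n"
    using det_0_iff_vec_prod_zero[OF C] by auto
  have Cy: "(\<Sum>j<n. C $$ (k,j) * y $ j) = 0" if "k < n" for k
  proof -
    have "(C *\<^sub>v y) $ k = 0" using y(3) that by simp
    then show ?thesis using that C y(1) by (auto simp: scalar_prod_def lessThan_atLeast0)
  qed
  have yz: "y $ j = 0" if j: "p \<le> j" "j < n" for j
  proof -
    define k where "k = p' + (j - p)"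
    have k: "\<not> k < p'" "k < p' + (n - p)" "k < n" "p + (k - p') = j" using j lt unfolding k_def by auto
    have Ck: "C $$ (k,l) = (if l = j then 1 else 0)" if "l < n" for l
      using k that unfolding C_def by auto
    have "(\<Sum>l<n. C $$ (k, l) * y $ l) = 0" using Cy[OF k(3)] .
    moreover have "(\<Sum>l<n. C $$ (k, l) * y $ l) = C $$ (k, j) * y $ j"
      by (rule sum_single) (use j Ck in auto)
    ultimately show ?thesis using Ck[OF j(2)] by simp
  qed
  define Y where "Y = mat n 1 (\<lambda>(i,_). y $ i)"
  have Y: "Y \<in> carrier_mat n 1" unfolding Y_def by auto
  define W where "W = mat_adjoint u * Y"
  have W: "W \<in> carrier_mat n 1" unfolding W_def using u Y by auto
  have Wz: "W $$ (k,0) = 0" if "k < p'" for k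
  proof -
    have "W $$ (k,0) = (\<Sum>j<n. mat_adjoint u $$ (k,j) * Y $$ (j,0))"
      unfolding W_def using u Y that lt n by (intro mult_entry[of _ n n _ 1]) auto
    also have "\<dots> = (\<Sum>j<n. C $$ (k,j) * y $ j)"
      by (intro sum.cong refl) (use u that lt n in \<open>auto simp: C_def Y_def\<close>)
    finally show ?thesis using Cy[of k] that lt n by auto
  qed
  have "mat_adjoint Y * Ipq p q * Y = mat_adjoint W * Ipq p' q' * W"
    unfolding eq W_def using u Y n
    by (simp add: adj_mult[of _ n n _ 1] assoc_dim carrier_matD[OF u] carrier_matD[OF Y])
  then have e0: "(mat_adjoint Y * Ipq p q * Y) $$ (0,0) = (mat_adjoint W * Ipq p' q' * W) $$ (0,0)" by simp
  have e1: "(mat_adjoint Y * Ipq p q * Y) $$ (0,0) = complex_of_real (\<Sum>k<p+q. (if k < p then 1 else -1) * (cmod (Y $$ (k,0)))^2)"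
    by (rule qf_Ipq) (use Y n in auto)
  have e2: "(mat_adjoint W * Ipq p' q' * W) $$ (0,0) = complex_of_real (\<Sum>k<p'+q'. (if k < p' then 1 else -1) * (cmod (W $$ (k,0)))^2)"
    by (rule qf_Ipq) (use W n in auto)
  have eqr: "(\<Sum>k<p+q. (if k < p then 1 else -1) * (cmod (Y $$ (k,0)))^2) =
      (\<Sum>k<p'+q'. (if k < p' then 1 else -1) * (cmod (W $$ (k,0)))^2)"
    using e0 unfolding e1 e2 of_real_eq_iff .
  obtain j where j: "j < n" "y $ j \<noteq> 0" using y(1,2) by (metis eq_vecI carrier_vecD index_zero_vec)
  then have jp: "j < p" using yz by (meson not_le)
  have "0 < (cmod (Y $$ (j,0)))^2" using j by (simp add: Y_def)
  also have "\<dots> \<le> (\<Sum>k<p+q. (if k < p then 1 else -1) * (cmod (Y $$ (k,0)))^2)"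
  proof -
    have "(\<Sum>k<p+q. (if k < p then 1 else -1) * (cmod (Y $$ (k,0)))^2) = (\<Sum>k<p+q. (if k < p then (cmod (Y $$ (k,0)))^2 else 0))"
      by (intro sum.cong refl) (use yz n in \<open>auto simp: Y_def\<close>)
    also have "(cmod (Y $$ (j,0)))^2 \<le> \<dots>"
      using member_le_sum[of j "{..<p+q}" "\<lambda>k. if k < p then (cmod (Y $$ (k,0)))^2 else 0"] j jp n by auto
    finally show ?thesis by simp
  qed
  also have "\<dots> \<le> 0" unfolding eqr
    by (intro sum_nonpos) (use Wz in auto)
  finally show False by simp
qed

lemma sylvester:
  fixes A A' L L' :: "complex mat"
  assumes A: "A \<in> carrier_mat m (p+q)" and L: "L \<in> carrier_mat (p+q) m" and LA: "L * A = 1\<^sub>m (p+q)"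
    and A': "A' \<in> carrier_mat m (p'+q')" and L': "L' \<in> carrier_mat (p'+q') m" and LA': "L' * A' = 1\<^sub>m (p'+q')"
    and eq: "A * Ipq p q * mat_adjoint A = A' * Ipq p' q' * mat_adjoint A'"
  shows "p = p' \<and> q = q'"
proof -
  define u where "u = L * A'"
  define u' where "u' = L' * A"
  have u: "u \<in> carrier_mat (p+q) (p'+q')" and u': "u' \<in> carrier_mat (p'+q') (p+q)"
    unfolding u_def u'_def using A L A' L' by auto
  from uniq[OF A L LA A' L' LA' Ipq_carrier Ipq_carrier Ipq_sq eq, folded u_def]
  have 1: "A' = A * u" "Ipq p q = u * Ipq p' q' * mat_adjoint u" by auto
  from uniq[OF A' L' LA' A L LA Ipq_carrier Ipq_carrier Ipq_sq eq[symmetric], folded u'_def]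
  have 2: "A = A' * u'" "Ipq p' q' = u' * Ipq p q * mat_adjoint u'" by auto
  have "u * u' = L * (A' * u')" unfolding u_def using L A' u' by simp
  also have "\<dots> = 1\<^sub>m (p+q)" using 2(1) LA by simp
  finally have uu': "u * u' = 1\<^sub>m (p+q)" .
  have "u' * u = L' * (A * u)" unfolding u'_def using L' A u by simp
  also have "\<dots> = 1\<^sub>m (p'+q')" using 1(1) LA' by simp
  finally have u'u: "u' * u = 1\<^sub>m (p'+q')" .
  have nn: "p + q = p' + q'" using dim_eq_from_inverse[OF u u' uu' u'u] .
  have "p \<le> p'" using inertia_le[of u "p+q" p q p' q'] u nn 1(2) by auto
  moreover have "p' \<le> p" using inertia_le[of u' "p+q" p' q' p q] u' nn 2(2) by auto
  ultimately show ?thesis using nn by auto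
qed

lemma in_Her:
  fixes A L :: "complex mat"
  assumes A: "A \<in> carrier_mat m (p+q)" and L: "L \<in> carrier_mat (p+q) m" and LA: "L * A = 1\<^sub>m (p+q)"
  shows "A * Ipq p q * mat_adjoint A \<in> Her m p q (m - (p+q))"
proof -
  define z where "z = A * Ipq p q * mat_adjoint A"
  have z: "z \<in> carrier_mat m m" unfolding z_def using A by auto
  have h: "mat_adjoint z = z" unfolding z_def using adj_Ipq_prod[OF A] .
  obtain p' q' A' L' where f: "A' \<in> carrier_mat m (p'+q')" "L' \<in> carrier_mat (p'+q') m"
     "L' * A' = 1\<^sub>m (p'+q')" "z = A' * Ipq p' q' * mat_adjoint A'"
     "num_pos_eig z = p'" "num_neg_eig z = q'" "eig_mult z 0 = m - (p'+q')"
    using herm_factor[OF z h] by blast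
  have "p = p' \<and> q = q'" using sylvester[OF A L LA f(1-3)] f(4) unfolding z_def by simp
  then show ?thesis using z h f unfolding Her_def z_def by auto
qed

definition emb_ok :: "nat \<Rightarrow> nat \<Rightarrow> (nat \<Rightarrow> nat) \<Rightarrow> bool" where
  "emb_ok m n e \<longleftrightarrow> (\<forall>k<n. e k < m) \<and> (\<forall>k l. k < l \<longrightarrow> l < n \<longrightarrow> e k < e l)"

definition Emat :: "nat \<Rightarrow> nat \<Rightarrow> (nat \<Rightarrow> nat) \<Rightarrow> complex mat" where
  "Emat m n e = mat m n (\<lambda>(i,k). if i = e k then 1 else 0)"

lemma Emat_carrier[simp]: "Emat m n e \<in> carrier_mat m n" by (simp add: Emat_def)
lemma Emat_dims[simp]: "dim_row (Emat m n e) = m" "dim_col (Emat m n e) = n" by (simp_all add: Emat_def)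

lemma emb_ok_lt: "emb_ok m n e \<Longrightarrow> k < n \<Longrightarrow> e k < m" unfolding emb_ok_def by auto

lemma emb_ok_mono: "emb_ok m n e \<Longrightarrow> k < l \<Longrightarrow> l < n \<Longrightarrow> e k < e l" unfolding emb_ok_def by auto

lemma emb_ok_inj: assumes "emb_ok m n e" "k < n" "l < n" "e k = e l" shows "k = l"
  using emb_ok_mono[OF assms(1), of k l] emb_ok_mono[OF assms(1), of l k] assms by (cases k l rule: linorder_cases) auto

lemma emb_ok_le_iff: assumes "emb_ok m n e" "k < n" "l < n" shows "e k \<le> e l \<longleftrightarrow> k \<le> l"
  using emb_ok_mono[OF assms(1), of k l] emb_ok_mono[OF assms(1), of l k] assms by (cases k l rule: linorder_cases) auto

lemma Emat_mult_entry:
  assumes e: "emb_ok m n e" and X: "X \<in> carrier_mat n p" and i: "i < m" and j: "j < p"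
  shows "(Emat m n e * X) $$ (i,j) = (if \<exists>k<n. e k = i then X $$ (THE k. k < n \<and> e k = i, j) else 0)"
proof -
  have "(Emat m n e * X) $$ (i,j) = (\<Sum>l<n. Emat m n e $$ (i,l) * X $$ (l,j))"
    using X i j by (intro mult_entry) auto
  also have "\<dots> = (if \<exists>k<n. e k = i then X $$ (THE k. k < n \<and> e k = i, j) else 0)"
  proof (cases "\<exists>k<n. e k = i")
    case True
    then obtain k where k: "k < n" "e k = i" by auto
    have the: "(THE k. k < n \<and> e k = i) = k"
      using k emb_ok_inj[OF e] by (intro the_equality) auto
    have "(\<Sum>l<n. Emat m n e $$ (i,l) * X $$ (l,j)) = Emat m n e $$ (i,k) * X $$ (k,j)"
      by (rule sum_single) (use k i emb_ok_inj[OF e] in \<open>auto simp: Emat_def\<close>)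
    then show ?thesis using k i True the by (auto simp: Emat_def)
  next
    case False
    then have "(\<Sum>l<n. Emat m n e $$ (i,l) * X $$ (l,j)) = 0"
      using i by (intro sum.neutral) (auto simp: Emat_def)
    then show ?thesis using False by auto
  qed
  finally show ?thesis .
qed

lemma Emat_mult_entry_e:
  assumes e: "emb_ok m n e" and X: "X \<in> carrier_mat n p" and k: "k < n" and j: "j < p"
  shows "(Emat m n e * X) $$ (e k, j) = X $$ (k, j)"
proof -
  have the: "(THE k'. k' < n \<and> e k' = e k) = k"
    using k emb_ok_inj[OF e] by (intro the_equality) auto
  show ?thesis using Emat_mult_entry[OF e X emb_ok_lt[OF e k] j] k the by auto
qed

lemma Emat_mult_entry_0:
  assumes e: "emb_ok m n e" and X: "X \<in> carrier_mat n p" and i: "i < m" "\<forall>k<n. e k \<noteq> i" and j: "j < p"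
  shows "(Emat m n e * X) $$ (i, j) = 0"
  using Emat_mult_entry[OF e X i(1) j] i(2) by auto

lemma adjE_mult_entry:
  assumes e: "emb_ok m n e" and Y: "Y \<in> carrier_mat m p" and k: "k < n" and j: "j < p"
  shows "(mat_adjoint (Emat m n e) * Y) $$ (k, j) = Y $$ (e k, j)"
proof -
  have "(mat_adjoint (Emat m n e) * Y) $$ (k, j) = (\<Sum>i<m. mat_adjoint (Emat m n e) $$ (k,i) * Y $$ (i,j))"
    using Y k j by (intro mult_entry) auto
  also have "\<dots> = mat_adjoint (Emat m n e) $$ (k,e k) * Y $$ (e k,j)"
    by (rule sum_single) (use k emb_ok_lt[OF e k] in \<open>auto simp: Emat_def\<close>)
  finally show ?thesis using k emb_ok_lt[OF e k] by (simp add: Emat_def)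
qed

lemma mult_E_entry:
  assumes e: "emb_ok m n e" and Y: "Y \<in> carrier_mat p m" and i: "i < p" and l: "l < n"
  shows "(Y * Emat m n e) $$ (i, l) = Y $$ (i, e l)"
proof -
  have "(Y * Emat m n e) $$ (i, l) = (\<Sum>j<m. Y $$ (i,j) * Emat m n e $$ (j,l))"
    using Y i l by (intro mult_entry) auto
  also have "\<dots> = Y $$ (i, e l) * Emat m n e $$ (e l,l)"
    by (rule sum_single) (use l emb_ok_lt[OF e l] in \<open>auto simp: Emat_def\<close>)
  finally show ?thesis using l emb_ok_lt[OF e l] by (simp add: Emat_def)
qed

lemma adjE_E: assumes e: "emb_ok m n e" shows "mat_adjoint (Emat m n e) * Emat m n e = 1\<^sub>m n"
proof (rule eq_matI)
  fix k l assume "k < dim_row (1\<^sub>m n :: complex mat)" "l < dim_col (1\<^sub>m n :: complex mat)"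
  then have kl: "k < n" "l < n" by auto
  have "(mat_adjoint (Emat m n e) * Emat m n e) $$ (k,l) = Emat m n e $$ (e k, l)"
    by (rule adjE_mult_entry[OF e _ kl]) simp
  then show "(mat_adjoint (Emat m n e) * Emat m n e) $$ (k,l) = 1\<^sub>m n $$ (k,l)"
    using kl emb_ok_lt[OF e kl(1)] emb_ok_inj[OF e kl] by (auto simp: Emat_def)
qed auto

lemma adjE_X_E:
  assumes e: "emb_ok m n e" and f: "emb_ok m n' f" and X: "X \<in> carrier_mat m m" and k: "k < n" and l: "l < n'"
  shows "(mat_adjoint (Emat m n e) * X * Emat m n' f) $$ (k,l) = X $$ (e k, f l)"
proof -
  have "(mat_adjoint (Emat m n e) * X * Emat m n' f) $$ (k,l) = (mat_adjoint (Emat m n e) * X) $$ (k, f l)"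
    by (rule mult_E_entry[OF f _ k l]) (use X in auto)
  also have "\<dots> = X $$ (e k, f l)"
    by (rule adjE_mult_entry[OF e X k emb_ok_lt[OF f l]])
  finally show ?thesis .
qed

definition bext :: "nat \<Rightarrow> nat \<Rightarrow> (nat \<Rightarrow> nat) \<Rightarrow> complex mat \<Rightarrow> complex mat" where
  "bext m n e b = mat m m (\<lambda>(i,j). if (\<exists>k<n. e k = i) \<and> (\<exists>l<n. e l = j)
       then b $$ (THE k. k < n \<and> e k = i, THE l. l < n \<and> e l = j) else if i = j then 1 else 0)"

lemma bext_dims[simp]: "dim_row (bext m n e b) = m" "dim_col (bext m n e b) = m" "bext m n e b \<in> carrier_mat m m"
  by (simp_all add: bext_def)

lemma bext_e: assumes e: "emb_ok m n e" "k < n" "l < n" shows "bext m n e b $$ (e k, e l) = b $$ (k,l)"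
proof -
  have the: "(THE k'. k' < n \<and> e k' = e k) = k" "(THE k'. k' < n \<and> e k' = e l) = l"
    using assms emb_ok_inj[OF e(1)] by (intro the_equality; auto)+
  then show ?thesis using assms emb_ok_lt[OF e(1)] by (auto simp: bext_def)
qed

lemma bext_borel:
  assumes e: "emb_ok m n e" and b: "b \<in> Borel n"
  shows "bext m n e b \<in> Borel m"
proof (rule borel_I)
  show "bext m n e b \<in> carrier_mat m m" by (simp add: bext_def)
next
  fix i j assume ij: "j < i" "i < m"
  show "bext m n e b $$ (i,j) = 0"
  proof (cases "(\<exists>k<n. e k = i) \<and> (\<exists>l<n. e l = j)")
    case True
    then obtain k l where kl: "k < n" "e k = i" "l < n" "e l = j" by auto
    then have "l < k" using emb_ok_le_iff[OF e kl(1) kl(3)] ij by auto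
    then show ?thesis using bext_e[OF e kl(1) kl(3)] kl borel_ut[OF b] by auto
  next
    case False
    then show ?thesis using ij by (auto simp: bext_def)
  qed
next
  fix i assume i: "i < m"
  show "bext m n e b $$ (i,i) \<noteq> 0"
  proof (cases "\<exists>k<n. e k = i")
    case True
    then obtain k where k: "k < n" "e k = i" by auto
    then show ?thesis using bext_e[OF e k(1) k(1), of b] b borel_iff by auto
  next
    case False
    then show ?thesis using i by (auto simp: bext_def)
  qed
qed

lemma bext_E:
  assumes e: "emb_ok m n e" and b: "b \<in> carrier_mat n n"
  shows "bext m n e b * Emat m n e = Emat m n e * b"
proof (rule eq_matI)
  fix i k assume "i < dim_row (Emat m n e * b)" "k < dim_col (Emat m n e * b)"
  then have ik: "i < m" "k < n" using b by auto
  have "(bext m n e b * Emat m n e) $$ (i,k) = bext m n e b $$ (i, e k)"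
    by (rule mult_E_entry[OF e _ ik]) (simp add: bext_def)
  also have "\<dots> = (Emat m n e * b) $$ (i,k)"
  proof (cases "\<exists>k'<n. e k' = i")
    case True
    then obtain k' where k': "k' < n" "e k' = i" by auto
    then show ?thesis using bext_e[OF e k'(1) ik(2)] Emat_mult_entry_e[OF e b k'(1) ik(2)] by simp
  next
    case False
    then have "bext m n e b $$ (i, e k) = 0" using ik emb_ok_lt[OF e] by (auto simp: bext_def)
    then show ?thesis using Emat_mult_entry_0[OF e b ik(1) _ ik(2)] False by auto
  qed
  finally show "(bext m n e b * Emat m n e) $$ (i,k) = (Emat m n e * b) $$ (i,k)" .
qed (use b in auto)

lemma compress_borel:
  assumes e: "emb_ok m n e" and b: "b \<in> Borel m"
  shows "mat_adjoint (Emat m n e) * b * Emat m n e \<in> Borel n"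
proof (rule borel_I)
  have "b \<in> carrier_mat m m" using b borel_carrier by auto
  then show "mat_adjoint (Emat m n e) * b * Emat m n e \<in> carrier_mat n n" by auto
next
  fix k l assume kl: "l < k" "k < n"
  have bc: "b \<in> carrier_mat m m" using b borel_carrier by auto
  show "(mat_adjoint (Emat m n e) * b * Emat m n e) $$ (k,l) = 0"
    using adjE_X_E[OF e e bc kl(2), of l] kl emb_ok_mono[OF e kl(1) kl(2)] borel_ut[OF b] emb_ok_lt[OF e kl(2)] by auto
next
  fix k assume k: "k < n"
  have bc: "b \<in> carrier_mat m m" using b borel_carrier by auto
  show "(mat_adjoint (Emat m n e) * b * Emat m n e) $$ (k,k) \<noteq> 0"
    using adjE_X_E[OF e e bc k k] b borel_iff emb_ok_lt[OF e k] by auto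
qed

lemma range_eq:
  assumes e: "emb_ok m n e" and f: "emb_ok m n f" and b: "b \<in> Borel m" and c: "c \<in> Borel m"
    and id: "mat_adjoint (Emat m n e) * c * Emat m n f * (mat_adjoint (Emat m n f) * b * Emat m n e) = 1\<^sub>m n"
    and k0: "k0 < n"
  shows "\<exists>l<n. f l = e k0"
proof (rule ccontr)
  assume nex: "\<not> (\<exists>l<n. f l = e k0)"
  have bc: "b \<in> carrier_mat m m" "c \<in> carrier_mat m m" using b c borel_carrier by auto
  have "1 = (mat_adjoint (Emat m n e) * c * Emat m n f * (mat_adjoint (Emat m n f) * b * Emat m n e)) $$ (k0,k0)"
    using id k0 by simp
  also have "\<dots> = (\<Sum>l<n. (mat_adjoint (Emat m n e) * c * Emat m n f) $$ (k0,l) * (mat_adjoint (Emat m n f) * b * Emat m n e) $$ (l,k0))"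
    using bc k0 by (intro mult_entry[of _ n n _ n]) auto
  also have "\<dots> = (\<Sum>l<n. c $$ (e k0, f l) * b $$ (f l, e k0))"
    by (intro sum.cong refl) (use adjE_X_E[OF e f bc(2)] adjE_X_E[OF f e bc(1)] k0 in auto)
  also have "\<dots> = 0"
  proof (rule sum.neutral, intro ballI)
    fix l assume l: "l \<in> {..<n}"
    then have "f l \<noteq> e k0" using nex by auto
    then consider "f l < e k0" | "e k0 < f l" by linarith
    then show "c $$ (e k0, f l) * b $$ (f l, e k0) = 0"
      using borel_ut[OF c, of "f l" "e k0"] borel_ut[OF b, of "e k0" "f l"] emb_ok_lt[OF e k0] emb_ok_lt[OF f, of l] l
      by cases auto
  qed
  finally show False by simp
qed

definition bstep :: "nat \<Rightarrow> (nat \<Rightarrow> complex) \<Rightarrow> complex mat \<Rightarrow> complex mat" where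
  "bstep m d b' = mat (Suc m) (Suc m) (\<lambda>(i,j). if i = 0 then (if j = 0 then 1 else d (j-1))
      else if j = 0 then 0 else b' $$ (i-1,j-1))"

lemma bstep_borel: assumes "b' \<in> Borel m" shows "bstep m d b' \<in> Borel (Suc m)"
proof (rule borel_I)
  show "bstep m d b' \<in> carrier_mat (Suc m) (Suc m)" by (simp add: bstep_def)
next
  fix i j assume ij: "j < i" "i < Suc m"
  then show "bstep m d b' $$ (i,j) = 0" using borel_ut[OF assms, of "j-1" "i-1"] by (auto simp: bstep_def)
next
  fix i assume i: "i < Suc m"
  then show "bstep m d b' $$ (i,i) \<noteq> 0" using assms borel_iff[of b' m] by (cases i) (auto simp: bstep_def)
qed

lemma bstep_mult:
  assumes A: "A \<in> carrier_mat (Suc m) n" and b': "b' \<in> carrier_mat m m" and j: "j < n"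
  defines "A' \<equiv> mat m n (\<lambda>(i,j). A $$ (Suc i, j))"
  shows "(bstep m d b' * A) $$ (0,j) = A $$ (0,j) + (\<Sum>l<m. d l * A $$ (Suc l, j))"
    and "i < m \<Longrightarrow> (bstep m d b' * A) $$ (Suc i,j) = (b' * A') $$ (i,j)"
proof -
  have "(bstep m d b' * A) $$ (0,j) = (\<Sum>l<Suc m. bstep m d b' $$ (0,l) * A $$ (l,j))"
    using A j by (intro mult_entry) (auto simp: bstep_def)
  also have "\<dots> = bstep m d b' $$ (0,0) * A $$ (0,j) + (\<Sum>l<m. bstep m d b' $$ (0,Suc l) * A $$ (Suc l,j))"
    by (rule sum.lessThan_Suc_shift)
  finally show "(bstep m d b' * A) $$ (0,j) = A $$ (0,j) + (\<Sum>l<m. d l * A $$ (Suc l, j))"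
    by (simp add: bstep_def)
next
  assume i: "i < m"
  have "(bstep m d b' * A) $$ (Suc i,j) = (\<Sum>l<Suc m. bstep m d b' $$ (Suc i,l) * A $$ (l,j))"
    using A j i by (intro mult_entry) (auto simp: bstep_def)
  also have "\<dots> = bstep m d b' $$ (Suc i,0) * A $$ (0,j) + (\<Sum>l<m. bstep m d b' $$ (Suc i,Suc l) * A $$ (Suc l,j))"
    by (rule sum.lessThan_Suc_shift)
  also have "\<dots> = (\<Sum>l<m. b' $$ (i,l) * A' $$ (l,j))"
    using i j by (simp add: bstep_def A'_def)
  also have "\<dots> = (b' * A') $$ (i,j)"
    using b' i j by (intro mult_entry[symmetric]) (auto simp: A'_def)
  finally show "(bstep m d b' * A) $$ (Suc i,j) = (b' * A') $$ (i,j)" .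
qed

lemma echelon:
  fixes A :: "complex mat"
  assumes "A \<in> carrier_mat m n"
  shows "\<exists>b R. b \<in> Borel m \<and> R \<subseteq> {..<m} \<and> (\<forall>i<m. i \<notin> R \<longrightarrow> (\<forall>j<n. (b * A) $$ (i,j) = 0)) \<and>
    (\<forall>c. (\<forall>j<n. (\<Sum>i\<in>R. c i * (b * A) $$ (i,j)) = 0) \<longrightarrow> (\<forall>i\<in>R. c i = 0))"
  using assms
proof (induction m arbitrary: A)
  case 0
  show ?case by (intro exI[of _ "1\<^sub>m 0"] exI[of _ "{}"]) (auto simp: borel_one)
next
  case (Suc m)
  note A = Suc.prems
  define A' where "A' = mat m n (\<lambda>(i,j). A $$ (Suc i, j))"
  have A': "A' \<in> carrier_mat m n" unfolding A'_def by auto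
  obtain b' R' where b': "b' \<in> Borel m" and R': "R' \<subseteq> {..<m}"
    and z': "\<forall>i<m. i \<notin> R' \<longrightarrow> (\<forall>j<n. (b' * A') $$ (i,j) = 0)"
    and ind': "\<forall>c. (\<forall>j<n. (\<Sum>i\<in>R'. c i * (b' * A') $$ (i,j)) = 0) \<longrightarrow> (\<forall>i\<in>R'. c i = 0)"
    using Suc.IH[OF A'] by blast
  have b'c: "b' \<in> carrier_mat m m" using b' borel_carrier by auto
  define B' where "B' = b' * A'"
  have sumR': "(\<Sum>i\<in>R'. c i * (\<Sum>l<m. b' $$ (i,l) * A $$ (Suc l, j))) = (\<Sum>i\<in>R'. c i * B' $$ (i,j))"
    if j: "j < n" for c j
  proof (intro sum.cong refl)
    fix i assume "i \<in> R'"
    then have i: "i < m" using R' by auto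
    have "B' $$ (i,j) = (\<Sum>l<m. b' $$ (i,l) * A' $$ (l,j))"
      unfolding B'_def using b'c A' i j by (intro mult_entry) auto
    then show "c i * (\<Sum>l<m. b' $$ (i,l) * A $$ (Suc l, j)) = c i * B' $$ (i,j)"
      using j by (simp add: A'_def)
  qed
  have rows: "(bstep m d b' * A) $$ (Suc i,j) = B' $$ (i,j)" if "i < m" "j < n" for d i j
    using bstep_mult(2)[OF A b'c that(2) that(1), where d=d] that unfolding B'_def A'_def by simp
  have rowsum: "(\<Sum>i\<in>Suc ` R'. c i * (bstep m d b' * A) $$ (i,j)) = (\<Sum>i\<in>R'. c (Suc i) * B' $$ (i,j))"
    if "j < n" for c d j
  proof -
    have "(\<Sum>i\<in>Suc ` R'. c i * (bstep m d b' * A) $$ (i,j)) = (\<Sum>i\<in>R'. c (Suc i) * (bstep m d b' * A) $$ (Suc i,j))"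
      by (subst sum.reindex) auto
    also have "\<dots> = (\<Sum>i\<in>R'. c (Suc i) * B' $$ (i,j))"
      by (intro sum.cong refl) (use R' rows that in auto)
    finally show ?thesis .
  qed
  have finR': "finite R'" using R' finite_subset by blast
  show ?case
  proof (cases "\<exists>c. \<forall>j<n. A $$ (0,j) = (\<Sum>i\<in>R'. c i * B' $$ (i,j))")
    case True
    then obtain c where c0: "\<forall>j<n. A $$ (0,j) = (\<Sum>i\<in>R'. c i * B' $$ (i,j))" by blast
    have c: "A $$ (0,j) = (\<Sum>i\<in>R'. c i * B' $$ (i,j))" if "j < n" for j using c0 that by blast
    define d where "d l = - (\<Sum>i\<in>R'. c i * b' $$ (i,l))" for l
    define b where "b = bstep m d b'"
    have row0: "(b * A) $$ (0,j) = 0" if j: "j < n" for j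
    proof -
      have e1: "(\<Sum>l<m. d l * A $$ (Suc l, j)) = (\<Sum>l<m. - (\<Sum>i\<in>R'. c i * b' $$ (i,l) * A $$ (Suc l, j)))"
        unfolding d_def by (intro sum.cong refl) (simp add: sum_distrib_right)
      have e2: "(\<Sum>l<m. - (\<Sum>i\<in>R'. c i * b' $$ (i,l) * A $$ (Suc l, j))) = - (\<Sum>l<m. \<Sum>i\<in>R'. c i * b' $$ (i,l) * A $$ (Suc l, j))"
        by (rule sum_negf)
      have e3: "(\<Sum>l<m. \<Sum>i\<in>R'. c i * b' $$ (i,l) * A $$ (Suc l, j)) = (\<Sum>i\<in>R'. \<Sum>l<m. c i * b' $$ (i,l) * A $$ (Suc l, j))"
        by (rule sum.swap)
      have e4: "(\<Sum>i\<in>R'. \<Sum>l<m. c i * b' $$ (i,l) * A $$ (Suc l, j)) = (\<Sum>i\<in>R'. c i * (\<Sum>l<m. b' $$ (i,l) * A $$ (Suc l, j)))"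
        by (intro sum.cong refl) (simp add: sum_distrib_left mult.assoc)
      have e5: "(\<Sum>i\<in>R'. c i * (\<Sum>l<m. b' $$ (i,l) * A $$ (Suc l, j))) = A $$ (0,j)"
        using sumR'[OF j, of c] c[OF j] by simp
      have "(\<Sum>l<m. d l * A $$ (Suc l, j)) = - A $$ (0,j)" unfolding e1 e2 e3 e4 e5 ..
      then show ?thesis unfolding b_def using bstep_mult(1)[OF A b'c j, where d=d] by simp
    qed
    show ?thesis
    proof (intro exI[of _ b] exI[of _ "Suc ` R'"] conjI allI impI)
      show "b \<in> Borel (Suc m)" unfolding b_def by (rule bstep_borel[OF b'])
      show "Suc ` R' \<subseteq> {..<Suc m}" using R' by auto
    next
      fix i j assume i: "i < Suc m" "i \<notin> Suc ` R'" and j: "j < n"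
      show "(b * A) $$ (i,j) = 0"
      proof (cases "i = 0")
        case True then show ?thesis using row0[OF j] by simp
      next
        case False
        then obtain i' where i': "i = Suc i'" "i' < m" "i' \<notin> R'" using i by (cases i) auto
        have "(b * A) $$ (i,j) = B' $$ (i',j)" unfolding b_def i'(1) by (rule rows[OF i'(2) j])
        also have "\<dots> = 0" using z' i' j unfolding B'_def by blast
        finally show ?thesis .
      qed
    next
      fix c' assume h: "\<forall>j<n. (\<Sum>i\<in>Suc ` R'. c' i * (b * A) $$ (i,j)) = 0"
      have "\<forall>j<n. (\<Sum>i\<in>R'. c' (Suc i) * B' $$ (i,j)) = 0"
      proof (intro allI impI)
        fix j assume j: "j < n"
        have "(\<Sum>i\<in>R'. c' (Suc i) * B' $$ (i,j)) = (\<Sum>i\<in>Suc ` R'. c' i * (b * A) $$ (i,j))"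
          unfolding b_def by (rule rowsum[OF j, where c=c' and d=d, symmetric])
        also have "\<dots> = 0" using h[rule_format, OF j] .
        finally show "(\<Sum>i\<in>R'. c' (Suc i) * B' $$ (i,j)) = 0" .
      qed
      then have "\<forall>i\<in>R'. c' (Suc i) = 0" using mp[OF spec[OF ind', of "\<lambda>i. c' (Suc i)"]] unfolding B'_def by blast
      then show "\<forall>i\<in>Suc ` R'. c' i = 0" by auto
    qed
  next
    case False
    define b where "b = bstep m (\<lambda>_. 0) b'"
    have row0: "(b * A) $$ (0,j) = A $$ (0,j)" if j: "j < n" for j
      unfolding b_def using bstep_mult(1)[OF A b'c j, where d="\<lambda>_. 0"] by simp
    show ?thesis
    proof (intro exI[of _ b] exI[of _ "insert 0 (Suc ` R')"] conjI allI impI)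
      show "b \<in> Borel (Suc m)" unfolding b_def by (rule bstep_borel[OF b'])
      show "insert 0 (Suc ` R') \<subseteq> {..<Suc m}" using R' by auto
    next
      fix i j assume i: "i < Suc m" "i \<notin> insert 0 (Suc ` R')" and j: "j < n"
      then obtain i' where i': "i = Suc i'" "i' < m" "i' \<notin> R'" by (cases i) auto
      have "(b * A) $$ (i,j) = B' $$ (i',j)" unfolding b_def i'(1) by (rule rows[OF i'(2) j])
      also have "\<dots> = 0" using z' i' j unfolding B'_def by blast
      finally show "(b * A) $$ (i,j) = 0" .
    next
      fix c' assume h: "\<forall>j<n. (\<Sum>i\<in>insert 0 (Suc ` R'). c' i * (b * A) $$ (i,j)) = 0"
      have h2: "c' 0 * A $$ (0,j) + (\<Sum>i\<in>R'. c' (Suc i) * B' $$ (i,j)) = 0" if j: "j < n" for j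
      proof -
        have "0 = (\<Sum>i\<in>insert 0 (Suc ` R'). c' i * (b * A) $$ (i,j))" using h j by auto
        also have "\<dots> = c' 0 * (b * A) $$ (0,j) + (\<Sum>i\<in>Suc ` R'. c' i * (b * A) $$ (i,j))"
          by (subst sum.insert) (use finR' in auto)
        also have "\<dots> = c' 0 * A $$ (0,j) + (\<Sum>i\<in>R'. c' (Suc i) * B' $$ (i,j))"
          using row0[OF j] rowsum[OF j, of c' "\<lambda>_. 0"] unfolding b_def by simp
        finally show ?thesis by simp
      qed
      have c0: "c' 0 = 0"
      proof (rule ccontr)
        assume nz: "c' 0 \<noteq> 0"
        have "\<forall>j<n. A $$ (0,j) = (\<Sum>i\<in>R'. (- c' (Suc i) / c' 0) * B' $$ (i,j))"
        proof (intro allI impI)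
          fix j assume j: "j < n"
          have "c' 0 * A $$ (0,j) = - (\<Sum>i\<in>R'. c' (Suc i) * B' $$ (i,j))"
            using h2[OF j] by (simp add: eq_neg_iff_add_eq_0)
          note cA = this
          have "A $$ (0,j) = (c' 0 * A $$ (0,j)) / c' 0" using nz by simp
          also have "\<dots> = - (\<Sum>i\<in>R'. c' (Suc i) * B' $$ (i,j)) / c' 0" unfolding cA ..
          finally have "A $$ (0,j) = - (\<Sum>i\<in>R'. c' (Suc i) * B' $$ (i,j)) / c' 0" .
          also have "\<dots> = (\<Sum>i\<in>R'. (- c' (Suc i) / c' 0) * B' $$ (i,j))"
            by (simp add: sum_divide_distrib sum_negf)
          finally show "A $$ (0,j) = (\<Sum>i\<in>R'. (- c' (Suc i) / c' 0) * B' $$ (i,j))" .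
        qed
        then have "\<exists>c. \<forall>j<n. A $$ (0,j) = (\<Sum>i\<in>R'. c i * B' $$ (i,j))"
          by (rule exI[of _ "\<lambda>i. - c' (Suc i) / c' 0"])
        then show False using False by simp
      qed
      have "\<forall>j<n. (\<Sum>i\<in>R'. c' (Suc i) * B' $$ (i,j)) = 0" using h2 c0 by auto
      then have "\<forall>i\<in>R'. c' (Suc i) = 0" using mp[OF spec[OF ind', of "\<lambda>i. c' (Suc i)"]] unfolding B'_def by blast
      then show "\<forall>i\<in>insert 0 (Suc ` R'). c' i = 0" using c0 by auto
    qed
  qed
qed

lemma one_mult_dim: "dim_row A = n \<Longrightarrow> 1\<^sub>m n * A = (A :: 'a :: semiring_1 mat)"
  by (rule left_mult_one_mat[of A n "dim_col A"]) auto

lemma mult_one_dim: "dim_col A = n \<Longrightarrow> A * 1\<^sub>m n = (A :: 'a :: semiring_1 mat)"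
  by (rule right_mult_one_mat[of A "dim_row A" n]) auto

lemma Ipq_Ipq_left: "dim_row X = p + q \<Longrightarrow> Ipq p q * (Ipq p q * X) = X"
proof -
  assume X: "dim_row X = p + q"
  have "Ipq p q * (Ipq p q * X) = (Ipq p q * Ipq p q) * X"
    using X by (simp add: assoc_dim del: Ipq_sq)
  then show ?thesis using X by (simp add: one_mult_dim)
qed

lemmas msimp = assoc_dim one_mult_dim mult_one_dim Ipq_Ipq_left

lemma adj_sandwich:
  assumes b: "(b :: complex mat) \<in> carrier_mat m m" and c: "c \<in> carrier_mat m m" and z: "z \<in> carrier_mat m m"
  shows "c * (b * z * mat_adjoint b) * mat_adjoint c = (c * b) * z * mat_adjoint (c * b)"
  by (simp add: adj_mult[OF c b] assoc_dim carrier_matD[OF b] carrier_matD[OF c] carrier_matD[OF z])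

lemma upq_carrier: "u \<in> Upq p q \<Longrightarrow> u \<in> carrier_mat (p+q) (p+q)"
  unfolding Upq_def by auto

lemma upq_props:
  assumes u: "u \<in> Upq p q"
  shows "(Ipq p q * mat_adjoint u * Ipq p q) * u = 1\<^sub>m (p+q)"
    and "u * (Ipq p q * mat_adjoint u * Ipq p q) = 1\<^sub>m (p+q)"
    and "u * Ipq p q * mat_adjoint u = Ipq p q"
proof -
  have uc: "u \<in> carrier_mat (p+q) (p+q)" using upq_carrier[OF u] .
  have eq: "mat_adjoint u * Ipq p q * u = Ipq p q" using u unfolding Upq_def by auto
  note dims = carrier_matD[OF uc]
  have "(Ipq p q * mat_adjoint u * Ipq p q) * u = Ipq p q * (mat_adjoint u * Ipq p q * u)"
    by (simp add: assoc_dim dims)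
  also have "\<dots> = 1\<^sub>m (p+q)" unfolding eq by simp
  finally show 1: "(Ipq p q * mat_adjoint u * Ipq p q) * u = 1\<^sub>m (p+q)" .
  show 2: "u * (Ipq p q * mat_adjoint u * Ipq p q) = 1\<^sub>m (p+q)"
    by (rule mat_mult_left_right_inverse[OF _ uc 1]) (use uc in auto)
  have "u * Ipq p q * mat_adjoint u = u * (Ipq p q * mat_adjoint u * Ipq p q) * Ipq p q"
    by (simp add: assoc_dim dims)
  also have "\<dots> = Ipq p q" unfolding 2 by simp
  finally show "u * Ipq p q * mat_adjoint u = Ipq p q" .
qed

lemma upq_of:
  assumes uc: "u \<in> carrier_mat (p+q) (p+q)" and eq: "u * Ipq p q * mat_adjoint u = Ipq p q"
  shows "u \<in> Upq p q"
proof -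
  note dims = carrier_matD[OF uc]
  have "u * (Ipq p q * mat_adjoint u * Ipq p q) = (u * Ipq p q * mat_adjoint u) * Ipq p q"
    by (simp add: assoc_dim dims)
  also have "\<dots> = 1\<^sub>m (p+q)" unfolding eq by simp
  finally have 1: "u * (Ipq p q * mat_adjoint u * Ipq p q) = 1\<^sub>m (p+q)" .
  have 2: "(Ipq p q * mat_adjoint u * Ipq p q) * u = 1\<^sub>m (p+q)"
    by (rule mat_mult_left_right_inverse[OF uc _ 1]) (use uc in auto)
  have "Ipq p q * ((Ipq p q * mat_adjoint u * Ipq p q) * u) = Ipq p q * 1\<^sub>m (p+q)" unfolding 2 ..
  then have "mat_adjoint u * Ipq p q * u = Ipq p q" by (simp add: msimp dims)
  then show ?thesis unfolding Upq_def using uc by auto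
qed

lemma upq_one: "1\<^sub>m (p+q) \<in> Upq p q"
  unfolding Upq_def by auto

lemma upq_mult:
  assumes u: "u \<in> Upq p q" and v: "v \<in> Upq p q"
  shows "u * v \<in> Upq p q"
proof (rule upq_of)
  have uc: "u \<in> carrier_mat (p+q) (p+q)" and vc: "v \<in> carrier_mat (p+q) (p+q)" using u v upq_carrier by auto
  note dims = carrier_matD[OF uc] carrier_matD[OF vc]
  show "u * v \<in> carrier_mat (p+q) (p+q)" using uc vc by auto
  have "u * v * Ipq p q * mat_adjoint (u * v) = u * (v * Ipq p q * mat_adjoint v) * mat_adjoint u"
    by (simp add: adj_mult[OF uc vc] assoc_dim dims)
  also have "\<dots> = Ipq p q" unfolding upq_props(3)[OF v] upq_props(3)[OF u] ..
  finally show "u * v * Ipq p q * mat_adjoint (u * v) = Ipq p q" .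
qed

lemma upq_inv:
  assumes u: "u \<in> Upq p q"
  shows "Ipq p q * mat_adjoint u * Ipq p q \<in> Upq p q"
proof (rule upq_of)
  have uc: "u \<in> carrier_mat (p+q) (p+q)" using u upq_carrier by auto
  note dims = carrier_matD[OF uc]
  show "Ipq p q * mat_adjoint u * Ipq p q \<in> carrier_mat (p+q) (p+q)" using uc by auto
  define v where "v = Ipq p q * mat_adjoint u * Ipq p q"
  have vc: "v \<in> carrier_mat (p+q) (p+q)" unfolding v_def using uc by auto
  have vu: "v * u = 1\<^sub>m (p+q)" unfolding v_def by (rule upq_props(1)[OF u])
  have "v * (u * Ipq p q * mat_adjoint u) * mat_adjoint v = (v * u) * Ipq p q * mat_adjoint (v * u)"
    by (rule adj_sandwich[OF uc vc]) simp
  also have "\<dots> = Ipq p q" unfolding vu by simp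
  finally show "Ipq p q * mat_adjoint u * Ipq p q * Ipq p q * mat_adjoint (Ipq p q * mat_adjoint u * Ipq p q) = Ipq p q"
    unfolding upq_props(3)[OF u] v_def .
qed

lemma glc_iff: "g \<in> GLc n \<longleftrightarrow> g \<in> carrier_mat n n \<and> (\<exists>h\<in>carrier_mat n n. h * g = 1\<^sub>m n)"
  unfolding GLc_def using invertible_iff by auto

lemma glc_mult: assumes "g \<in> GLc n" "h \<in> GLc n" shows "g * h \<in> GLc n"
proof -
  obtain g' h' where g: "g \<in> carrier_mat n n" "g' \<in> carrier_mat n n" "g' * g = 1\<^sub>m n"
    and h: "h \<in> carrier_mat n n" "h' \<in> carrier_mat n n" "h' * h = 1\<^sub>m n" using assms glc_iff by auto
  have "(h' * g') * (g * h) = h' * ((g' * g) * h)" using g(1,2) h(1,2) by (simp add: assoc_dim carrier_matD)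
  also have "\<dots> = h' * h" unfolding g(3) using h(1) by simp
  also have "\<dots> = 1\<^sub>m n" using h(3) .
  finally show ?thesis unfolding glc_iff using g h by (intro conjI bexI[of _ "h' * g'"]) auto
qed

lemma borel_glc: "b \<in> Borel n \<Longrightarrow> b \<in> GLc n"
  unfolding Borel_def GLc_def by auto

lemma upq_glc: "u \<in> Upq p q \<Longrightarrow> u \<in> GLc (p+q)"
  unfolding glc_iff using upq_props(1) upq_carrier by (metis Ipq_carrier adj_carrier mult_carrier_mat)

lemma her_carrier: "z \<in> Her m p q r \<Longrightarrow> z \<in> carrier_mat m m"
  unfolding Her_def by auto

lemma her_equiv: "equiv (Her m p q r) (her_orbit_rel m p q r)"
proof (rule equivI)
  show "her_orbit_rel m p q r \<subseteq> Her m p q r \<times> Her m p q r" unfolding her_orbit_rel_def by auto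
next
  show "refl_on (Her m p q r) (her_orbit_rel m p q r)"
  proof (rule refl_onI)
    fix z assume z: "z \<in> Her m p q r"
    then have "z = 1\<^sub>m m * z * mat_adjoint (1\<^sub>m m)" using her_carrier[OF z] by simp
    then show "(z,z) \<in> her_orbit_rel m p q r" unfolding her_orbit_rel_def using z borel_one by blast
  qed
next
  show "sym (her_orbit_rel m p q r)"
  proof (rule symI)
    fix z w assume "(z,w) \<in> her_orbit_rel m p q r"
    then obtain b where zw: "z \<in> Her m p q r" "w \<in> Her m p q r" "b \<in> Borel m" "w = b * z * mat_adjoint b"
      unfolding her_orbit_rel_def by auto
    obtain c where c: "c \<in> Borel m" "c * b = 1\<^sub>m m" using borel_inv[OF zw(3)] by auto
    have "c * w * mat_adjoint c = (c * b) * z * mat_adjoint (c * b)"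
      unfolding zw(4) by (rule adj_sandwich) (use zw c borel_carrier her_carrier in auto)
    also have "\<dots> = z" unfolding c(2) using her_carrier[OF zw(1)] by simp
    finally have eqz: "z = c * w * mat_adjoint c" by simp
    show "(w,z) \<in> her_orbit_rel m p q r" unfolding her_orbit_rel_def using zw(1,2) c(1) eqz by blast
  qed
next
  show "trans (her_orbit_rel m p q r)"
  proof (rule transI)
    fix x y z assume "(x,y) \<in> her_orbit_rel m p q r" "(y,z) \<in> her_orbit_rel m p q r"
    then obtain b c where xy: "x \<in> Her m p q r" "y \<in> Her m p q r" "z \<in> Her m p q r" "b \<in> Borel m" "y = b * x * mat_adjoint b"
      "c \<in> Borel m" "z = c * y * mat_adjoint c"
      unfolding her_orbit_rel_def by auto
    have "z = (c * b) * x * mat_adjoint (c * b)"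
      unfolding xy(7) xy(5) by (rule adj_sandwich) (use xy borel_carrier her_carrier in auto)
    then show "(x,z) \<in> her_orbit_rel m p q r" unfolding her_orbit_rel_def using xy borel_mult by auto
  qed
qed

lemma dc_equiv: "equiv (GLc (p+q)) (dcoset_rel p q)"
proof (rule equivI)
  show "dcoset_rel p q \<subseteq> GLc (p+q) \<times> GLc (p+q)" unfolding dcoset_rel_def by auto
next
  show "refl_on (GLc (p+q)) (dcoset_rel p q)"
  proof (rule refl_onI)
    fix g assume g: "g \<in> GLc (p+q)"
    then have "g = 1\<^sub>m (p+q) * g * 1\<^sub>m (p+q)" unfolding GLc_def by auto
    then show "(g,g) \<in> dcoset_rel p q" unfolding dcoset_rel_def using g borel_one upq_one by blast
  qed
next
  show "sym (dcoset_rel p q)"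
  proof (rule symI)
    fix g h assume "(g,h) \<in> dcoset_rel p q"
    then obtain b u where gh: "g \<in> GLc (p+q)" "h \<in> GLc (p+q)" "b \<in> Borel (p+q)" "u \<in> Upq p q" "h = b * g * u"
      unfolding dcoset_rel_def by auto
    obtain c where c: "c \<in> Borel (p+q)" "c * b = 1\<^sub>m (p+q)" using borel_inv[OF gh(3)] by auto
    define v where "v = Ipq p q * mat_adjoint u * Ipq p q"
    have v: "v \<in> Upq p q" unfolding v_def by (rule upq_inv[OF gh(4)])
    have gc: "g \<in> carrier_mat (p+q) (p+q)" using gh(1) unfolding GLc_def by auto
    have bc: "b \<in> carrier_mat (p+q) (p+q)" "c \<in> carrier_mat (p+q) (p+q)" using gh c borel_carrier by auto
    have uc: "u \<in> carrier_mat (p+q) (p+q)" "v \<in> carrier_mat (p+q) (p+q)" using gh(4) v upq_carrier by auto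
    have "c * h * v = (c * b) * g * (u * v)" unfolding gh(5)
      by (simp add: assoc_dim carrier_matD[OF gc] carrier_matD[OF bc(1)] carrier_matD[OF bc(2)] carrier_matD[OF uc(1)] carrier_matD[OF uc(2)])
    also have "\<dots> = g" unfolding c(2) v_def upq_props(2)[OF gh(4)] using gc by simp
    finally have eqg: "g = c * h * v" by simp
    show "(h,g) \<in> dcoset_rel p q" unfolding dcoset_rel_def using gh(1,2) c(1) v eqg by blast
  qed
next
  show "trans (dcoset_rel p q)"
  proof (rule transI)
    fix x y z assume "(x,y) \<in> dcoset_rel p q" "(y,z) \<in> dcoset_rel p q"
    then obtain b c u v where xy: "x \<in> GLc (p+q)" "y \<in> GLc (p+q)" "z \<in> GLc (p+q)" "b \<in> Borel (p+q)" "u \<in> Upq p q"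
      "y = b * x * u" "c \<in> Borel (p+q)" "v \<in> Upq p q" "z = c * y * v"
      unfolding dcoset_rel_def by auto
    have xc: "x \<in> carrier_mat (p+q) (p+q)" using xy(1) unfolding GLc_def by auto
    have bc: "b \<in> carrier_mat (p+q) (p+q)" "c \<in> carrier_mat (p+q) (p+q)" using xy borel_carrier by auto
    have uc: "u \<in> carrier_mat (p+q) (p+q)" "v \<in> carrier_mat (p+q) (p+q)" using xy upq_carrier by auto
    have "z = (c * b) * x * (u * v)" unfolding xy(9) xy(6)
      by (simp add: assoc_dim carrier_matD[OF xc] carrier_matD[OF bc(1)] carrier_matD[OF bc(2)] carrier_matD[OF uc(1)] carrier_matD[OF uc(2)])
    then show "(x,z) \<in> dcoset_rel p q" unfolding dcoset_rel_def using xy borel_mult upq_mult by blast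
  qed
qed

definition eJ :: "nat set \<Rightarrow> nat \<Rightarrow> nat" where
  "eJ J k = sorted_list_of_set J ! k - 1"

lemma eJ_ok:
  assumes J: "J \<subseteq> {1..m}" "card J = n"
  shows "emb_ok m n (eJ J)" and "\<And>i. i < m \<Longrightarrow> (\<exists>k<n. eJ J k = i) \<longleftrightarrow> Suc i \<in> J"
proof -
  have fin: "finite J" using J(1) finite_subset by blast
  define xs where "xs = sorted_list_of_set J"
  have xs: "set xs = J" "length xs = n" "sorted_wrt (<) xs" unfolding xs_def using fin J(2) by auto
  have mem: "xs ! k \<in> J" if "k < n" for k using xs that nth_mem by metis
  have rng: "1 \<le> xs ! k" "xs ! k \<le> m" if "k < n" for k using mem[OF that] J(1) by auto
  show "emb_ok m n (eJ J)" unfolding emb_ok_def eJ_def xs_def[symmetric]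
  proof (intro conjI allI impI)
    fix k assume "k < n" then show "xs ! k - 1 < m" using rng[of k] by auto
  next
    fix k l assume kl: "k < l" "l < n"
    then have "xs ! k < xs ! l" using sorted_wrt_nth_less[OF xs(3) kl(1)] xs(2) by auto
    then show "xs ! k - 1 < xs ! l - 1" using rng[of k] kl by auto
  qed
  fix i assume i: "i < m"
  show "(\<exists>k<n. eJ J k = i) \<longleftrightarrow> Suc i \<in> J"
  proof
    assume "\<exists>k<n. eJ J k = i"
    then obtain k where k: "k < n" "xs ! k - 1 = i" unfolding eJ_def xs_def by auto
    then have "xs ! k = Suc i" using rng[OF k(1)] by auto
    then show "Suc i \<in> J" using mem[OF k(1)] by simp
  next
    assume "Suc i \<in> J"
    then obtain k where "k < n" "xs ! k = Suc i" using xs(1,2) by (metis in_set_conv_nth)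
    then show "\<exists>k<n. eJ J k = i" unfolding eJ_def xs_def[symmetric] by auto
  qed
qed

lemma eJ_inj:
  assumes J: "J \<subseteq> {1..m}" "card J = n" and K: "K \<subseteq> {1..m}" "card K = n"
    and h: "\<forall>k<n. \<exists>l<n. eJ K l = eJ J k"
  shows "J = K"
proof -
  have "J \<subseteq> K"
  proof
    fix x assume x: "x \<in> J"
    then obtain i where i: "x = Suc i" "i < m" using J(1) by (cases x) auto
    then obtain k where k: "k < n" "eJ J k = i" using eJ_ok(2)[OF J i(2)] x by auto
    then obtain l where "l < n" "eJ K l = i" using h by metis
    then show "x \<in> K" using eJ_ok(2)[OF K i(2)] i by auto
  qed
  moreover have "finite K" using K(1) finite_subset by blast
  ultimately show ?thesis using J(2) K(2) card_subset_eq by metis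
qed

definition Zm :: "nat \<Rightarrow> nat \<Rightarrow> nat \<Rightarrow> nat set \<Rightarrow> complex mat \<Rightarrow> complex mat" where
  "Zm m p q J g = (Emat m (p+q) (eJ J) * g) * Ipq p q * mat_adjoint (Emat m (p+q) (eJ J) * g)"

lemma Zm_Her:
  assumes J: "J \<subseteq> {1..m}" "card J = p + q" and g: "g \<in> GLc (p+q)"
  shows "Zm m p q J g \<in> Her m p q (m - (p+q))"
proof -
  define n where "n = p + q"
  define E where "E = Emat m n (eJ J)"
  have e: "emb_ok m n (eJ J)" using eJ_ok(1)[OF J] unfolding n_def .
  obtain h where gh: "g \<in> carrier_mat n n" "h \<in> carrier_mat n n" "h * g = 1\<^sub>m n" using g glc_iff unfolding n_def by auto
  have "(h * mat_adjoint E) * (E * g) = h * (mat_adjoint E * E) * g"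
    using gh unfolding E_def by (simp add: assoc_dim)
  also have "\<dots> = 1\<^sub>m n" unfolding E_def adjE_E[OF e] using gh by simp
  finally have "(h * mat_adjoint E) * (E * g) = 1\<^sub>m n" .
  moreover have "E * g \<in> carrier_mat m n" "h * mat_adjoint E \<in> carrier_mat n m" using gh unfolding E_def by auto
  ultimately show ?thesis unfolding Zm_def using in_Her[of "E * g" m p q] unfolding E_def n_def by blast
qed

lemma sand2:
  assumes b: "(b::complex mat) \<in> carrier_mat m m" and X: "X \<in> carrier_mat m n" and I: "I \<in> carrier_mat n n"
  shows "(b * X) * I * mat_adjoint (b * X) = b * (X * I * mat_adjoint X) * mat_adjoint b"
  by (simp add: adj_mult[OF b X] assoc_dim carrier_matD[OF b] carrier_matD[OF X] carrier_matD[OF I])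

lemma sand3:
  assumes X: "(X::complex mat) \<in> carrier_mat m n" and u: "u \<in> carrier_mat n n" and I: "I \<in> carrier_mat n n"
  shows "(X * u) * I * mat_adjoint (X * u) = X * (u * I * mat_adjoint u) * mat_adjoint X"
  by (simp add: adj_mult[OF X u] assoc_dim carrier_matD[OF u] carrier_matD[OF X] carrier_matD[OF I])

lemma Zm_dc:
  assumes J: "J \<subseteq> {1..m}" "card J = p + q" and gh: "(g,h) \<in> dcoset_rel p q"
  shows "(Zm m p q J g, Zm m p q J h) \<in> her_orbit_rel m p q (m - (p+q))"
proof -
  define n where "n = p + q"
  define E where "E = Emat m n (eJ J)"
  have e: "emb_ok m n (eJ J)" using eJ_ok(1)[OF J] unfolding n_def .
  obtain b u where g: "g \<in> GLc n" "h \<in> GLc n" and b: "b \<in> Borel n" and u: "u \<in> Upq p q" and h: "h = b * g * u"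
    using gh unfolding dcoset_rel_def n_def by auto
  have gc: "g \<in> carrier_mat n n" using g unfolding GLc_def by auto
  have bc: "b \<in> carrier_mat n n" using b borel_carrier by auto
  have uc: "u \<in> carrier_mat n n" using u upq_carrier unfolding n_def by auto
  define bt where "bt = bext m n (eJ J) b"
  have bt: "bt \<in> Borel m" unfolding bt_def by (rule bext_borel[OF e b])
  have btc: "bt \<in> carrier_mat m m" using bt borel_carrier by auto
  have btE: "bt * E = E * b" unfolding bt_def E_def by (rule bext_E[OF e bc])
  have Ec: "E \<in> carrier_mat m n" unfolding E_def by simp
  have "E * h = (E * b) * g * u" unfolding h using Ec bc gc uc by (simp add: assoc_dim carrier_matD)
  also have "\<dots> = bt * ((E * g) * u)" unfolding btE[symmetric] using Ec btc gc uc by (simp add: assoc_dim carrier_matD)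
  finally have Eh: "E * h = bt * ((E * g) * u)" .
  have EG: "E * g \<in> carrier_mat m n" using Ec gc by auto
  have "Zm m p q J h = bt * (((E * g) * u) * Ipq p q * mat_adjoint ((E * g) * u)) * mat_adjoint bt"
    unfolding Zm_def E_def[symmetric] n_def[symmetric] Eh
    by (rule sand2[OF btc]) (use EG uc in \<open>auto simp: n_def\<close>)
  also have "((E * g) * u) * Ipq p q * mat_adjoint ((E * g) * u) = (E * g) * Ipq p q * mat_adjoint (E * g)"
    using sand3[OF EG uc, of "Ipq p q"] upq_props(3)[OF u] by (simp add: n_def)
  finally have "Zm m p q J h = bt * Zm m p q J g * mat_adjoint bt"
    unfolding Zm_def E_def n_def by simp
  moreover have "Zm m p q J g \<in> Her m p q (m - (p+q))" "Zm m p q J h \<in> Her m p q (m - (p+q))"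
    using Zm_Her[OF J] g unfolding n_def by auto
  ultimately show ?thesis unfolding her_orbit_rel_def using bt by blast
qed

lemma Zm_inj:
  assumes J: "J \<subseteq> {1..m}" "card J = p + q" and K: "K \<subseteq> {1..m}" "card K = p + q"
    and g: "g \<in> GLc (p+q)" and h: "h \<in> GLc (p+q)"
    and rel: "(Zm m p q J g, Zm m p q K h) \<in> her_orbit_rel m p q (m - (p+q))"
  shows "J = K \<and> (g, h) \<in> dcoset_rel p q"
proof -
  define n where "n = p + q"
  define EJ where "EJ = Emat m n (eJ J)"
  define EK where "EK = Emat m n (eJ K)"
  have eJo: "emb_ok m n (eJ J)" using eJ_ok(1)[OF J] unfolding n_def .
  have eKo: "emb_ok m n (eJ K)" using eJ_ok(1)[OF K] unfolding n_def .
  have EJc: "EJ \<in> carrier_mat m n" and EKc: "EK \<in> carrier_mat m n" unfolding EJ_def EK_def by auto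
  obtain b where b: "b \<in> Borel m" and Zeq: "Zm m p q K h = b * Zm m p q J g * mat_adjoint b"
    using rel unfolding her_orbit_rel_def by auto
  obtain c where c: "c \<in> Borel m" "c * b = 1\<^sub>m m" "b * c = 1\<^sub>m m" using borel_inv[OF b] by auto
  have bc: "b \<in> carrier_mat m m" "c \<in> carrier_mat m m" using b c borel_carrier by auto
  obtain gi where gi: "g \<in> carrier_mat n n" "gi \<in> carrier_mat n n" "gi * g = 1\<^sub>m n"
    using g glc_iff unfolding n_def by auto
  obtain hi where hi: "h \<in> carrier_mat n n" "hi \<in> carrier_mat n n" "hi * h = 1\<^sub>m n"
    using h glc_iff unfolding n_def by auto
  note dims = carrier_matD[OF EJc] carrier_matD[OF EKc] carrier_matD[OF bc(1)] carrier_matD[OF bc(2)]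
    carrier_matD[OF gi(1)] carrier_matD[OF gi(2)] carrier_matD[OF hi(1)] carrier_matD[OF hi(2)]
  define A where "A = b * (EJ * g)"
  define A' where "A' = EK * h"
  define L where "L = gi * mat_adjoint EJ * c"
  define L' where "L' = hi * mat_adjoint EK"
  have A: "A \<in> carrier_mat m n" and A': "A' \<in> carrier_mat m n" and L: "L \<in> carrier_mat n m" and L': "L' \<in> carrier_mat n m"
    unfolding A_def A'_def L_def L'_def using bc EJc EKc gi hi by auto
  have "L * A = gi * (mat_adjoint EJ * ((c * b) * (EJ * g)))"
    unfolding L_def A_def by (simp add: assoc_dim dims)
  also have "\<dots> = gi * ((mat_adjoint EJ * EJ) * g)" unfolding c(2) using EJc gi by (simp add: msimp dims)
  also have "\<dots> = 1\<^sub>m n" unfolding EJ_def adjE_E[OF eJo] using gi by (simp add: msimp dims)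
  finally have LA: "L * A = 1\<^sub>m n" .
  have "L' * A' = hi * ((mat_adjoint EK * EK) * h)"
    unfolding L'_def A'_def by (simp add: assoc_dim dims)
  also have "\<dots> = 1\<^sub>m n" unfolding EK_def adjE_E[OF eKo] using hi by (simp add: msimp dims)
  finally have LA': "L' * A' = 1\<^sub>m n" .
  have eq: "A * Ipq p q * mat_adjoint A = A' * Ipq p q * mat_adjoint A'"
  proof -
    have "A * Ipq p q * mat_adjoint A = b * Zm m p q J g * mat_adjoint b"
      unfolding A_def Zm_def EJ_def[symmetric] n_def[symmetric]
      by (rule sand2[OF bc(1)]) (use EJc gi in \<open>auto simp: n_def\<close>)
    also have "\<dots> = Zm m p q K h" using Zeq by simp
    also have "\<dots> = A' * Ipq p q * mat_adjoint A'" unfolding Zm_def A'_def EK_def n_def ..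
    finally show ?thesis .
  qed
  define u where "u = L * A'"
  have uc: "u \<in> carrier_mat n n" unfolding u_def using L A' by auto
  have Ic: "Ipq p q \<in> carrier_mat n n" "Ipq p q * Ipq p q = 1\<^sub>m n" unfolding n_def by auto
  from uniq[OF A L LA A' L' LA' Ic(1) Ic eq]
  have A'u: "A' = A * u" and Iu: "Ipq p q = u * Ipq p q * mat_adjoint u" unfolding u_def by auto
  have u: "u \<in> Upq p q" by (rule upq_of) (use uc Iu in \<open>auto simp: n_def\<close>)
  define g' where "g' = g * u"
  have g': "g' \<in> GLc n" unfolding g'_def n_def by (rule glc_mult[OF g upq_glc[OF u]])
  obtain gi' where gi': "g' \<in> carrier_mat n n" "gi' \<in> carrier_mat n n" "gi' * g' = 1\<^sub>m n"
    using g' glc_iff by auto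
  have g'gi': "g' * gi' = 1\<^sub>m n" using mat_mult_left_right_inverse[OF gi'(2) gi'(1) gi'(3)] .
  note dims2 = dims carrier_matD[OF uc] carrier_matD[OF gi'(1)] carrier_matD[OF gi'(2)]
  have EKh: "EK * h = b * (EJ * g')" using A'u unfolding A'_def A_def g'_def by (simp add: assoc_dim dims2)
  have EJg': "EJ * g' = c * (EK * h)"
  proof -
    have "c * (EK * h) = (c * b) * (EJ * g')" unfolding EKh by (simp add: assoc_dim dims2)
    then show ?thesis unfolding c(2) using EJc gi'(1) by (simp add: msimp dims2)
  qed
  have g'eq: "g' = mat_adjoint EJ * c * EK * h"
  proof -
    have "g' = (mat_adjoint EJ * EJ) * g'" unfolding EJ_def adjE_E[OF eJo] using gi'(1) by simp
    also have "\<dots> = mat_adjoint EJ * (EJ * g')" by (simp add: assoc_dim dims2)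
    also have "\<dots> = mat_adjoint EJ * c * EK * h" unfolding EJg' by (simp add: assoc_dim dims2)
    finally show ?thesis .
  qed
  have heq: "h = mat_adjoint EK * b * EJ * g'"
  proof -
    have "h = (mat_adjoint EK * EK) * h" unfolding EK_def adjE_E[OF eKo] using hi(1) by simp
    also have "\<dots> = mat_adjoint EK * (EK * h)" by (simp add: assoc_dim dims2)
    also have "\<dots> = mat_adjoint EK * b * EJ * g'" unfolding EKh by (simp add: assoc_dim dims2)
    finally show ?thesis .
  qed
  define M where "M = mat_adjoint EJ * c * EK * (mat_adjoint EK * b * EJ)"
  have Mc: "M \<in> carrier_mat n n" unfolding M_def using EJc EKc bc by auto
  have "M * g' = (mat_adjoint EJ * c * EK) * (mat_adjoint EK * b * EJ * g')"
    unfolding M_def by (simp add: assoc_dim dims2)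
  also have "\<dots> = (mat_adjoint EJ * c * EK) * h" unfolding heq[symmetric] ..
  also have "\<dots> = g'" using g'eq by simp
  finally have "M * g' = g'" .
  note Mg = this
  have "M = M * (g' * gi')" unfolding g'gi' using Mc by simp
  also have "\<dots> = (M * g') * gi'" using Mc gi' by simp
  also have "\<dots> = 1\<^sub>m n" unfolding Mg g'gi' ..
  finally have M1: "M = 1\<^sub>m n" .
  have "\<forall>k<n. \<exists>l<n. eJ K l = eJ J k"
  proof (intro allI impI)
    fix k assume k: "k < n"
    show "\<exists>l<n. eJ K l = eJ J k"
      by (rule range_eq[OF eJo eKo b c(1) _ k]) (use M1 in \<open>simp add: M_def EJ_def EK_def\<close>)
  qed
  then have JK: "J = K" using eJ_inj[OF J K] unfolding n_def by blast
  have hb: "h = (mat_adjoint EJ * b * EJ) * g * u"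
    using heq unfolding g'_def JK[symmetric] EK_def EJ_def[symmetric] by (simp add: assoc_dim dims2)
  have "mat_adjoint EJ * b * EJ \<in> Borel n" unfolding EJ_def by (rule compress_borel[OF eJo b])
  then have "(g, h) \<in> dcoset_rel p q" unfolding dcoset_rel_def using g h u hb n_def by blast
  then show ?thesis using JK by simp
qed

lemma Zm_surj:
  assumes z: "z \<in> Her m p q r" and r: "r = m - (p+q)"
  shows "\<exists>J g. J \<subseteq> {1..m} \<and> card J = p + q \<and> g \<in> GLc (p+q) \<and> (z, Zm m p q J g) \<in> her_orbit_rel m p q r"
proof -
  define n where "n = p + q"
  have zc: "z \<in> carrier_mat m m" and zh: "mat_adjoint z = z" and zp: "num_pos_eig z = p" and zq: "num_neg_eig z = q"
    using z unfolding Her_def by auto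
  obtain p' q' A L where f: "A \<in> carrier_mat m (p'+q')" "L \<in> carrier_mat (p'+q') m"
     "L * A = 1\<^sub>m (p'+q')" "z = A * Ipq p' q' * mat_adjoint A"
     "num_pos_eig z = p'" "num_neg_eig z = q'"
    using herm_factor[OF zc zh] by blast
  have pq: "p' = p" "q' = q" using f zp zq by auto
  have A: "A \<in> carrier_mat m n" and L: "L \<in> carrier_mat n m" and LA: "L * A = 1\<^sub>m n"
    and zA: "z = A * Ipq p q * mat_adjoint A" using f pq unfolding n_def by auto
  obtain b R where b: "b \<in> Borel m" and R: "R \<subseteq> {..<m}"
    and zr: "\<forall>i<m. i \<notin> R \<longrightarrow> (\<forall>j<n. (b * A) $$ (i,j) = 0)"
    and ind: "\<forall>c. (\<forall>j<n. (\<Sum>i\<in>R. c i * (b * A) $$ (i,j)) = 0) \<longrightarrow> (\<forall>i\<in>R. c i = 0)"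
    using echelon[OF A] by blast
  obtain c where c: "c \<in> Borel m" "c * b = 1\<^sub>m m" using borel_inv[OF b] by auto
  have bc: "b \<in> carrier_mat m m" "c \<in> carrier_mat m m" using b c borel_carrier by auto
  define B where "B = b * A"
  have Bc: "B \<in> carrier_mat m n" unfolding B_def using bc A by auto
  define J where "J = Suc ` R"
  define n' where "n' = card J"
  have J: "J \<subseteq> {1..m}" "card J = n'" unfolding J_def n'_def using R by auto
  define e where "e = eJ J"
  have eo: "emb_ok m n' e" unfolding e_def by (rule eJ_ok(1)[OF J])
  have erng: "(\<exists>k<n'. e k = i) \<longleftrightarrow> i \<in> R" if "i < m" for i
    using eJ_ok(2)[OF J that] unfolding e_def J_def by auto
  have eimg: "e ` {..<n'} = R"
  proof
    show "e ` {..<n'} \<subseteq> R" using erng emb_ok_lt[OF eo] by auto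
    show "R \<subseteq> e ` {..<n'}" using erng R by force
  qed
  have einj: "inj_on e {..<n'}" using emb_ok_inj[OF eo] unfolding inj_on_def by auto
  define E where "E = Emat m n' e"
  have Ec: "E \<in> carrier_mat m n'" unfolding E_def by simp
  define g0 where "g0 = mat_adjoint E * B"
  have g0c: "g0 \<in> carrier_mat n' n" unfolding g0_def using Ec Bc by auto
  have g0e: "g0 $$ (k,j) = B $$ (e k, j)" if "k < n'" "j < n" for k j
    unfolding g0_def E_def by (rule adjE_mult_entry[OF eo Bc that])
  have Eg0: "E * g0 = B"
  proof (rule eq_matI)
    fix i j assume "i < dim_row B" "j < dim_col B"
    then have ij: "i < m" "j < n" using Bc by auto
    show "(E * g0) $$ (i,j) = B $$ (i,j)"
    proof (cases "\<exists>k<n'. e k = i")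
      case True
      then obtain k where k: "k < n'" "e k = i" by auto
      have "(E * g0) $$ (e k, j) = g0 $$ (k,j)" unfolding E_def by (rule Emat_mult_entry_e[OF eo g0c k(1) ij(2)])
      then show ?thesis using g0e[OF k(1) ij(2)] k by simp
    next
      case False
      then have "(E * g0) $$ (i,j) = 0" unfolding E_def using Emat_mult_entry_0[OF eo g0c ij(1) _ ij(2)] by auto
      moreover have "i \<notin> R" using False erng[OF ij(1)] by auto
      ultimately show ?thesis using zr ij unfolding B_def by auto
    qed
  qed (use Ec g0c Bc in auto)
  define M where "M = L * c * E"
  have Mc: "M \<in> carrier_mat n n'" unfolding M_def using L bc Ec by auto
  note dims = carrier_matD[OF A] carrier_matD[OF L] carrier_matD[OF bc(1)] carrier_matD[OF bc(2)]
    carrier_matD[OF Ec] carrier_matD[OF g0c] carrier_matD[OF Mc] carrier_matD[OF Bc]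
  have Mg0: "M * g0 = 1\<^sub>m n"
  proof -
    have "M * g0 = L * (c * (E * g0))" unfolding M_def by (simp add: assoc_dim dims)
    also have "\<dots> = L * ((c * b) * A)" unfolding Eg0 B_def by (simp add: assoc_dim dims)
    also have "\<dots> = 1\<^sub>m n" unfolding c(2) using A LA by simp
    finally show ?thesis .
  qed
  have rind: "\<forall>k<n'. v k = 0" if hv: "\<forall>j<n. (\<Sum>k<n'. v k * g0 $$ (k,j)) = 0" for v
  proof -
    define cf where "cf i = v (the_inv_into {..<n'} e i)" for i
    have cfe: "cf (e k) = v k" if "k < n'" for k
      unfolding cf_def using the_inv_into_f_f[OF einj] that by auto
    have "\<forall>j<n. (\<Sum>i\<in>R. cf i * (b * A) $$ (i,j)) = 0"
    proof (intro allI impI)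
      fix j assume j: "j < n"
      have "(\<Sum>i\<in>R. cf i * (b * A) $$ (i,j)) = (\<Sum>k<n'. cf (e k) * B $$ (e k, j))"
        unfolding eimg[symmetric] B_def by (rule sum.reindex[OF einj, unfolded comp_def])
      also have "\<dots> = (\<Sum>k<n'. v k * g0 $$ (k,j))"
        by (intro sum.cong refl) (use cfe g0e j in auto)
      also have "\<dots> = 0" using hv j by blast
      finally show "(\<Sum>i\<in>R. cf i * (b * A) $$ (i,j)) = 0" .
    qed
    then have "\<forall>i\<in>R. cf i = 0" using mp[OF spec[OF ind, of cf]] by blast
    then show ?thesis using cfe eimg by auto
  qed
  have g0M: "g0 * M = 1\<^sub>m n'"
  proof (rule eq_matI)
    fix k l assume "k < dim_row (1\<^sub>m n' :: complex mat)" "l < dim_col (1\<^sub>m n' :: complex mat)"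
    then have kl: "k < n'" "l < n'" by auto
    define v where "v l' = (g0 * M) $$ (k,l') - 1\<^sub>m n' $$ (k,l')" for l'
    have "\<forall>j<n. (\<Sum>l'<n'. v l' * g0 $$ (l',j)) = 0"
    proof (intro allI impI)
      fix j assume j: "j < n"
      have "(\<Sum>l'<n'. v l' * g0 $$ (l',j)) = (\<Sum>l'<n'. (g0 * M) $$ (k,l') * g0 $$ (l',j)) - (\<Sum>l'<n'. 1\<^sub>m n' $$ (k,l') * g0 $$ (l',j))"
        unfolding v_def by (simp add: algebra_simps sum_subtractf)
      also have "(\<Sum>l'<n'. (g0 * M) $$ (k,l') * g0 $$ (l',j)) = ((g0 * M) * g0) $$ (k,j)"
        by (rule mult_entry[symmetric, of _ n' n' _ n]) (use g0c Mc kl j in auto)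
      also have "(g0 * M) * g0 = g0" using Mg0 g0c Mc by (simp add: assoc_dim dims)
      also have "(\<Sum>l'<n'. 1\<^sub>m n' $$ (k,l') * g0 $$ (l',j)) = 1\<^sub>m n' $$ (k,k) * g0 $$ (k,j)"
        by (rule sum_single) (use kl in auto)
      finally show "(\<Sum>l'<n'. v l' * g0 $$ (l',j)) = 0" using kl by simp
    qed
    then have "v l = 0" using rind kl by blast
    then show "(g0 * M) $$ (k,l) = 1\<^sub>m n' $$ (k,l)" unfolding v_def by simp
  qed (use g0c Mc in auto)
  have nn: "n' = n" using dim_eq_from_inverse[OF g0c Mc g0M Mg0] .
  have g0: "g0 \<in> GLc (p+q)" unfolding glc_iff using g0c Mc Mg0 nn unfolding n_def by auto
  have Jc: "J \<subseteq> {1..m}" "card J = p + q" using J nn unfolding n_def by auto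
  have "b * z * mat_adjoint b = B * Ipq p q * mat_adjoint B"
    unfolding zA B_def by (rule sand2[OF bc(1), symmetric]) (use A in \<open>auto simp: n_def\<close>)
  also have "\<dots> = Zm m p q J g0" unfolding Zm_def Eg0[symmetric] E_def e_def nn n_def ..
  finally have zZ: "Zm m p q J g0 = b * z * mat_adjoint b" by simp
  have "Zm m p q J g0 \<in> Her m p q r" using Zm_Her[OF Jc g0] r by simp
  then have "(z, Zm m p q J g0) \<in> her_orbit_rel m p q r" unfolding her_orbit_rel_def using z b zZ by blast
  then show ?thesis using Jc g0 by blast
qed

theorem lemma8p16:
  fixes m p q r :: nat
  assumes "p + q \<le> m" and "r = m - (p + q)"
  shows "\<exists>f. bij_betw f (Her m p q r // her_orbit_rel m p q r)
           (SIGMA J : {J. J \<subseteq> {1..m} \<and> card J = p + q}. GLc (p + q) // dcoset_rel p q)"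
proof -
  note r = assms(2)
  define Js where "Js = {J. J \<subseteq> {1..m} \<and> card J = p + q}"
  define S where "S = (SIGMA J : Js. GLc (p + q) // dcoset_rel p q)"
  define T where "T = Her m p q r // her_orbit_rel m p q r"
  define Psi where "Psi = (\<lambda>(J, G). her_orbit_rel m p q r `` {Zm m p q J (SOME g. g \<in> G)})"
  have heq: "equiv (Her m p q r) (her_orbit_rel m p q r)" by (rule her_equiv)
  have deq: "equiv (GLc (p+q)) (dcoset_rel p q)" by (rule dc_equiv)
  have ZH: "Zm m p q J g \<in> Her m p q r" if "J \<in> Js" "g \<in> GLc (p+q)" for J g
    using Zm_Her[of J m p q g] that r unfolding Js_def by auto
  have psi: "Psi (J, dcoset_rel p q `` {g}) = her_orbit_rel m p q r `` {Zm m p q J g}"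
    if J: "J \<in> Js" and g: "g \<in> GLc (p+q)" for J g
  proof -
    define g' where "g' = (SOME x. x \<in> dcoset_rel p q `` {g})"
    have "g \<in> dcoset_rel p q `` {g}" by (rule equiv_class_self[OF deq g])
    then have "g' \<in> dcoset_rel p q `` {g}" unfolding g'_def by (rule someI)
    then have "(g, g') \<in> dcoset_rel p q" by simp
    then have "(Zm m p q J g, Zm m p q J g') \<in> her_orbit_rel m p q r"
      using Zm_dc[of J m p q g g'] J r unfolding Js_def by auto
    then have "her_orbit_rel m p q r `` {Zm m p q J g} = her_orbit_rel m p q r `` {Zm m p q J g'}"
      by (rule equiv_class_eq[OF heq])
    then show ?thesis unfolding Psi_def g'_def by simp
  qed
  have inj: "inj_on Psi S"
  proof (rule inj_onI)
    fix x y assume x: "x \<in> S" and y: "y \<in> S" and eq: "Psi x = Psi y"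
    obtain J G where xJ: "x = (J, G)" "J \<in> Js" "G \<in> GLc (p+q) // dcoset_rel p q" using x unfolding S_def by auto
    obtain K H where yK: "y = (K, H)" "K \<in> Js" "H \<in> GLc (p+q) // dcoset_rel p q" using y unfolding S_def by auto
    obtain g where g: "G = dcoset_rel p q `` {g}" "g \<in> GLc (p+q)" using xJ(3) by (rule quotientE)
    obtain h where h: "H = dcoset_rel p q `` {h}" "h \<in> GLc (p+q)" using yK(3) by (rule quotientE)
    have "her_orbit_rel m p q r `` {Zm m p q J g} = her_orbit_rel m p q r `` {Zm m p q K h}"
      using eq unfolding xJ(1) yK(1) g(1) h(1) psi[OF xJ(2) g(2)] psi[OF yK(2) h(2)] .
    then have "(Zm m p q J g, Zm m p q K h) \<in> her_orbit_rel m p q r"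
      using eq_equiv_class_iff[OF heq ZH[OF xJ(2) g(2)] ZH[OF yK(2) h(2)]] by simp
    then have "J = K \<and> (g, h) \<in> dcoset_rel p q"
      using Zm_inj[of J m p q K g h] xJ(2) yK(2) g(2) h(2) r unfolding Js_def by auto
    moreover then have "G = H" unfolding g(1) h(1) by (intro equiv_class_eq[OF deq]) auto
    ultimately show "x = y" using xJ(1) yK(1) by simp
  qed
  have img: "Psi ` S = T"
  proof
    show "Psi ` S \<subseteq> T"
    proof
      fix X assume "X \<in> Psi ` S"
      then obtain J G where JG: "X = Psi (J, G)" "J \<in> Js" "G \<in> GLc (p+q) // dcoset_rel p q"
        unfolding S_def by auto
      obtain g where g: "G = dcoset_rel p q `` {g}" "g \<in> GLc (p+q)" using JG(3) by (rule quotientE)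
      have "X = her_orbit_rel m p q r `` {Zm m p q J g}" using JG(1) psi[OF JG(2) g(2)] g(1) by simp
      then show "X \<in> T" unfolding T_def using ZH[OF JG(2) g(2)] by (simp add: quotientI)
    qed
  next
    show "T \<subseteq> Psi ` S"
    proof
      fix X assume "X \<in> T"
      then obtain z where z: "X = her_orbit_rel m p q r `` {z}" "z \<in> Her m p q r"
        unfolding T_def by (rule quotientE)
      obtain J g where Jg: "J \<subseteq> {1..m}" "card J = p + q" "g \<in> GLc (p+q)"
        "(z, Zm m p q J g) \<in> her_orbit_rel m p q r"
        using Zm_surj[OF z(2) r] by blast
      have J: "J \<in> Js" unfolding Js_def using Jg by auto
      have "X = her_orbit_rel m p q r `` {Zm m p q J g}"
        unfolding z(1) by (rule equiv_class_eq[OF heq Jg(4)])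
      also have "\<dots> = Psi (J, dcoset_rel p q `` {g})" using psi[OF J Jg(3)] by simp
      finally show "X \<in> Psi ` S" unfolding S_def using J Jg(3) by (auto intro: quotientI)
    qed
  qed
  have "bij_betw Psi S T" unfolding bij_betw_def using inj img by simp
  then have "bij_betw (the_inv_into S Psi) T S" by (rule bij_betw_the_inv_into)
  then show ?thesis unfolding S_def T_def Js_def by blast
qed

end
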